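(* Let $k\ge1$, $d\ge1$ and $n_1,\dots,n_k\ge2$ be integers. For every $\Sigma\in\Sigma_k(n_1,\dots,n_k)$, the linear automorphism of $W_k(d;n_1,\dots,n_k)$ given by the action of $\Sigma$ changes the orientation according to $\mathrm{orient}(\Sigma)$, i.e. it preserves orientation if $\mathrm{orient}(\Sigma)=+1$ and reverses it if $\mathrm{orient}(\Sigma)=-1$. In particular $\mathrm{orient}:\Sigma_k(n_1,\dots,n_k)\to(\{-1,+1\},\cdot)$ is a group homomorphism.
   Context: $W_n=\{x\in\mathbb{R}^n:\sum x_i=0\}$ with $S_n$ acting by $\sigma\cdot(x_1,\dots,x_n)=(x_{\sigma^{-1}(1)},\dots,x_{\sigma^{-1}(n)})$. Wreath product action: if $G$ acts on $X$ and $S_n$ on $Y$, $G^{\times n}\rtimes S_n$ ($S_n$ permuting factors) acts on $X^{\times n}\times Y$ by $(g_1,\dots,g_n;\sigma)\cdot(x_1,\dots,x_n;y)=(g_1x_{\sigma^{-1}(1)},\dots,g_nx_{\sigma^{-1}(n)};\sigma y)$. $\Sigma_1(n_1)=S_{n_1}$, $\Sigma_k(n_1,\dots,n_k)=\Sigma_{k-1}(n_1,\dots,n_{k-1})^{\times n_k}\rtimes S_{n_k}$. $W_1(d;n_1)=W_{n_1}^{\oplus(d-1)}$ (as $\{(z_1,\dots,z_{n_1})\in(\mathbb{R}^{d-1})^{n_1}:\sum z_i=0\}$ with $S_{n_1}$ permuting the $z_i$), $W_k(d;n_1,\dots,n_k)=W_{k-1}(d;n_1,\dots,n_{k-1})^{\oplus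 n_k}\oplus W_{n_k}^{\oplus(d-1)}$ with the inductively defined wreath product action. The orientation function $\mathrm{orient}:\Sigma_k(n_1,\dots,n_k)\to\{-1,+1\}$ is defined by $\mathrm{orient}(\sigma)=(\mathrm{sgn}\,\sigma)^{d-1}$ for $k=1$, and for $k\ge2$ by $\mathrm{orient}(\Sigma_1,\dots,\Sigma_{n_k};\sigma)=(\mathrm{sgn}\,\sigma)^{(d-1)n_1\cdots n_{k-1}}\cdot\mathrm{orient}(\Sigma_1)\cdots\mathrm{orient}(\Sigma_{n_k})$. *)

theory Defs
  imports "Jordan_Normal_Form.Determinant" "HOL-Combinatorics.Permutations"
begin

text \<open>Elements of the iterated wreath products Sigma_k(n_1,...,n_k).
  Base sigma : an element of S_n (a permutation of {0..<n}).
  Node G sigma : the element (G 0, ..., G (n-1); sigma) of Sigma_{k-1}^n semidirect S_n.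
  The parameter list rs used below is rev [n_1,...,n_k] = [n_k,...,n_1] (outermost first).\<close>
datatype wr = Base "nat \<Rightarrow> nat" | Node "nat \<Rightarrow> wr" "nat \<Rightarrow> nat"

fun inSigma :: "nat list \<Rightarrow> wr \<Rightarrow> bool" where
  "inSigma [] S = False"
| "inSigma [n] S = (case S of Base \<sigma> \<Rightarrow> \<sigma> permutes {..<n} | Node G \<sigma> \<Rightarrow> False)"
| "inSigma (n # m # r) S = (case S of Base \<sigma> \<Rightarrow> False
     | Node G \<sigma> \<Rightarrow> \<sigma> permutes {..<n} \<and> (\<forall>i<n. inSigma (m # r) (G i)))"

primrec mult :: "wr \<Rightarrow> wr \<Rightarrow> wr" where
  "mult (Base \<sigma>) T = (case T of Base \<tau> \<Rightarrow> Base (\<sigma> \<circ> \<tau>) | Node H \<tau> \<Rightarrow> Base \<sigma>)"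
| "mult (Node G \<sigma>) T = (case T of Base \<tau> \<Rightarrow> Node G \<sigma>
     | Node H \<tau> \<Rightarrow> Node (\<lambda>i. mult (G i) (H (Hilbert_Choice.inv \<sigma> i))) (\<sigma> \<circ> \<tau>))"

text \<open>Level 1: coordinate [i, j] = j-th component (j < d-1) of z_i.
  Level k: coordinate 0 # i # c = coordinate c of the i-th copy of W_{k-1};
           coordinate [1, i, j] = j-th component of the i-th point in W_{n_k}^(d-1).\<close>
fun Wsp :: "nat \<Rightarrow> nat list \<Rightarrow> (nat list \<Rightarrow> real) set" where
  "Wsp d [] = {}"
| "Wsp d [n] = {x. (\<forall>c. x c \<noteq> 0 \<longrightarrow> (\<exists>i j. c = [i, j] \<and> i < n \<and> j < d - 1))
      \<and> (\<forall>j<d - 1. (\<Sum>i<n. x [i, j]) = 0)}"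
| "Wsp d (n # m # r) = {x. (\<forall>c. x c \<noteq> 0 \<longrightarrow>
         ((\<exists>i c'. c = 0 # i # c' \<and> i < n) \<or> (\<exists>i j. c = [1, i, j] \<and> i < n \<and> j < d - 1)))
      \<and> (\<forall>j<d - 1. (\<Sum>i<n. x [1, i, j]) = 0)
      \<and> (\<forall>i<n. (\<lambda>c'. x (0 # i # c')) \<in> Wsp d (m # r))}"

primrec act :: "wr \<Rightarrow> (nat list \<Rightarrow> real) \<Rightarrow> (nat list \<Rightarrow> real)" where
  "act (Base \<sigma>) x = (\<lambda>c. if length c = 2 then x [Hilbert_Choice.inv \<sigma> (c ! 0), c ! 1] else 0)"
| "act (Node G \<sigma>) x = (\<lambda>c.
     if 2 \<le> length c \<and> c ! 0 = 0
       then act (G (c ! 1)) (\<lambda>c''. x (0 # Hilbert_Choice.inv \<sigma> (c ! 1) # c'')) (drop 2 c)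
     else if length c = 3 \<and> c ! 0 = 1 then x [1, Hilbert_Choice.inv \<sigma> (c ! 1), c ! 2]
     else 0)"

primrec orient :: "nat \<Rightarrow> nat list \<Rightarrow> wr \<Rightarrow> int" where
  "orient d rs (Base \<sigma>) = sign \<sigma> ^ (d - 1)"
| "orient d rs (Node G \<sigma>) = sign \<sigma> ^ ((d - 1) * prod_list (tl rs))
     * (\<Prod>i<hd rs. orient d (tl rs) (G i))"

definition is_basis :: "(nat list \<Rightarrow> real) set \<Rightarrow> (nat list \<Rightarrow> real) list \<Rightarrow> bool" where
  "is_basis W bs \<longleftrightarrow> set bs \<subseteq> W \<and>
     (\<forall>x\<in>W. \<exists>!c. (\<forall>i\<ge>length bs. c i = 0) \<and> x = (\<lambda>p. \<Sum>i<length bs. c i * (bs ! i) p))"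

definition mat_repr :: "(nat list \<Rightarrow> real) list \<Rightarrow> ((nat list \<Rightarrow> real) \<Rightarrow> (nat list \<Rightarrow> real))
    \<Rightarrow> real mat \<Rightarrow> bool" where
  "mat_repr bs f A \<longleftrightarrow> A \<in> carrier_mat (length bs) (length bs) \<and>
     (\<forall>j<length bs. f (bs ! j) = (\<lambda>p. \<Sum>i<length bs. A $$ (i, j) * (bs ! i) p))"

end

theory Submission
  imports Defs
begin


definition lc :: "(nat \<Rightarrow> real) \<Rightarrow> (nat list \<Rightarrow> real) list \<Rightarrow> nat list \<Rightarrow> real" where
  "lc c bs = (\<lambda>p. \<Sum>i<length bs. c i * (bs!i) p)"

lemma mat_repr_lc: "mat_repr bs f A \<longleftrightarrow> A \<in> carrier_mat (length bs) (length bs) \<and>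
   (\<forall>j<length bs. f (bs!j) = lc (\<lambda>i. A $$ (i,j)) bs)"
  unfolding mat_repr_def lc_def by simp

lemma lc_cong: "(\<And>i. i < length bs \<Longrightarrow> c i = c' i) \<Longrightarrow> lc c bs = lc c' bs"
  unfolding lc_def by (intro ext sum.cong) auto

lemma lc_diff: "(\<lambda>p. lc c bs p - lc c' bs p) = lc (\<lambda>i. c i - c' i) bs"
  unfolding lc_def by (auto simp: sum_subtractf left_diff_distrib)

lemma lc_delta: "j < length bs \<Longrightarrow> lc (\<lambda>i. if i = j then 1 else 0) bs = bs!j"
proof (rule ext)
  fix p assume j: "j < length bs"
  have "lc (\<lambda>i. if i = j then 1 else 0) bs p = (\<Sum>i<length bs. if i = j then (bs!i) p else 0)"
    unfolding lc_def by (intro sum.cong) auto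
  also have "\<dots> = (bs!j) p" using j by (simp add: sum.delta')
  finally show "lc (\<lambda>i. if i = j then 1 else 0) bs p = (bs!j) p" .
qed

lemma basis_exists: "is_basis W bs \<Longrightarrow> x \<in> W \<Longrightarrow> \<exists>c. x = lc c bs"
  unfolding is_basis_def lc_def by blast

lemma basis_unique:
  assumes B: "is_basis W bs" and W: "lc c bs \<in> W" and eq: "lc c bs = lc c' bs" and i: "i < length bs"
  shows "c i = c' i"
proof -
  define t where "t = (\<lambda>c i. if i < length bs then c i else (0::real))"
  have tl: "lc (t c) bs = lc c bs" for c by (rule lc_cong) (simp add: t_def)
  from B W have E: "\<exists>!u. (\<forall>i\<ge>length bs. u i = 0) \<and> lc c bs = lc u bs"
    unfolding is_basis_def lc_def by auto
  have "(\<forall>i\<ge>length bs. t c i = 0) \<and> lc c bs = lc (t c) bs" using tl by (simp add: t_def)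
  moreover have "(\<forall>i\<ge>length bs. t c' i = 0) \<and> lc c bs = lc (t c') bs" using tl eq by (simp add: t_def)
  ultimately have "t c = t c'" using E by blast
  hence "t c i = t c' i" by simp
  thus ?thesis using i by (simp add: t_def)
qed

lemma basisI:
  assumes "set bs \<subseteq> W" and sp: "\<And>x. x \<in> W \<Longrightarrow> \<exists>c. x = lc c bs"
    and ind: "\<And>c. lc c bs = (\<lambda>_. 0) \<Longrightarrow> \<forall>i<length bs. c i = 0"
  shows "is_basis W bs"
  unfolding is_basis_def
proof (intro conjI ballI assms(1))
  fix x assume x: "x \<in> W"
  obtain c where c: "x = lc c bs" using sp[OF x] by blast
  define c2 where "c2 = (\<lambda>i. if i < length bs then c i else 0)"
  have "x = lc c2 bs" unfolding c by (rule lc_cong) (simp add: c2_def)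
  hence ex: "(\<forall>i\<ge>length bs. c2 i = 0) \<and> x = lc c2 bs" by (simp add: c2_def)
  show "\<exists>!c. (\<forall>i\<ge>length bs. c i = 0) \<and> x = (\<lambda>p. \<Sum>i<length bs. c i * (bs ! i) p)"
  proof (rule ex1I[of _ c2])
    show "(\<forall>i\<ge>length bs. c2 i = 0) \<and> x = (\<lambda>p. \<Sum>i<length bs. c2 i * (bs ! i) p)"
      using ex unfolding lc_def by simp
  next
    fix d assume d: "(\<forall>i\<ge>length bs. d i = 0) \<and> x = (\<lambda>p. \<Sum>i<length bs. d i * (bs ! i) p)"
    hence "lc d bs = lc c2 bs" using ex unfolding lc_def by simp
    hence "lc (\<lambda>i. d i - c2 i) bs = (\<lambda>_. 0)" using lc_diff[of d bs c2] by (metis diff_self)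
    hence "\<forall>i<length bs. d i - c2 i = 0" by (rule ind)
    note h = this
    show "d = c2"
    proof (rule ext)
      fix i show "d i = c2 i"
      proof (cases "i < length bs")
        case True thus ?thesis using h by simp
      next
        case False thus ?thesis using d ex by simp
      qed
    qed
  qed
qed

lemma lc_lc:
  assumes "\<And>k. k < length ys \<Longrightarrow> ys!k = lc (X k) bs"
  shows "lc c ys = lc (\<lambda>i. \<Sum>k<length ys. X k i * c k) bs"
proof (rule ext)
  fix p
  have "lc c ys p = (\<Sum>k<length ys. c k * lc (X k) bs p)"
    unfolding lc_def[of c ys] using assms by simp
  also have "\<dots> = (\<Sum>k<length ys. \<Sum>i<length bs. c k * X k i * (bs!i) p)"
    unfolding lc_def by (simp add: sum_distrib_left mult.assoc)
  also have "\<dots> = (\<Sum>i<length bs. \<Sum>k<length ys. X k i * c k * (bs!i) p)"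
    by (subst sum.swap) (simp add: mult.commute mult.left_commute)
  also have "\<dots> = lc (\<lambda>i. \<Sum>k<length ys. X k i * c k) bs p"
    unfolding lc_def by (simp add: sum_distrib_right)
  finally show "lc c ys p = lc (\<lambda>i. \<Sum>k<length ys. X k i * c k) bs p" .
qed

lemma mult_entry:
  assumes "A \<in> carrier_mat n m" "B \<in> carrier_mat m q" "i < n" "j < q"
  shows "(A * B) $$ (i,j) = (\<Sum>k<m. A $$ (i,k) * B $$ (k,j))"
  using assms by (simp add: scalar_prod_def atLeast0LessThan)

lemma inverse_len:
  fixes P Q :: "real mat"
  assumes P: "P \<in> carrier_mat n n'" and Q: "Q \<in> carrier_mat n' n" and QP: "Q * P = 1\<^sub>m n'"
  shows "n' \<le> n"
proof (rule ccontr)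
  assume "\<not> n' \<le> n" hence nn: "n < n'" by simp
  define P2 where "P2 = mat n' n' (\<lambda>(i,j). if i < n then P $$ (i,j) else 0)"
  define Q2 where "Q2 = mat n' n' (\<lambda>(i,j). if j < n then Q $$ (i,j) else 0)"
  have P2c: "P2 \<in> carrier_mat n' n'" and Q2c: "Q2 \<in> carrier_mat n' n'" by (auto simp: P2_def Q2_def)
  have "Q2 * P2 = 1\<^sub>m n'"
  proof (rule eq_matI)
    fix i j assume ij: "i < dim_row (1\<^sub>m n')" "j < dim_col (1\<^sub>m n')"
    have "(Q2 * P2) $$ (i,j) = (\<Sum>k<n'. Q2 $$ (i,k) * P2 $$ (k,j))"
      using ij by (intro mult_entry[OF Q2c P2c]) auto
    also have "\<dots> = (\<Sum>k<n'. if k < n then Q $$ (i,k) * P $$ (k,j) else 0)"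
      using ij by (intro sum.cong) (auto simp: Q2_def P2_def)
    also have "\<dots> = (\<Sum>k<n. Q $$ (i,k) * P $$ (k,j))"
    proof -
      have "(\<Sum>k<n'. if k < n then Q $$ (i,k) * P $$ (k,j) else 0)
         = (\<Sum>k<n. if k < n then Q $$ (i,k) * P $$ (k,j) else 0)"
        by (rule sum.mono_neutral_right) (use nn in auto)
      thus ?thesis by simp
    qed
    also have "\<dots> = (Q * P) $$ (i,j)" using ij by (intro mult_entry[symmetric, OF Q P]) auto
    finally show "(Q2 * P2) $$ (i,j) = 1\<^sub>m n' $$ (i,j)" using QP by simp
  qed (auto simp: Q2_def P2_def)
  hence "det Q2 * det P2 = 1" using det_mult[OF Q2c P2c] by simp
  moreover have "det P2 = 0"
  proof -
    have Z: "(\<Prod>i = 0..<n'. P2 $$ (i, p i)) = 0" if p: "p permutes {0..<n'}" for p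
    proof (rule prod_zero)
      have "p (n'-1) < n'" using p nn permutes_in_image[OF p, of "n'-1"] by auto
      thus "\<exists>a\<in>{0..<n'}. P2 $$ (a, p a) = 0" using nn by (intro bexI[of _ "n'-1"]) (auto simp: P2_def)
    qed auto
    show ?thesis unfolding det_def'[OF P2c] by (rule sum.neutral) (use Z in simp)
  qed
  ultimately show False by simp
qed

theorem det_basis_indep:
  fixes f :: "(nat list \<Rightarrow> real) \<Rightarrow> (nat list \<Rightarrow> real)"
  assumes B1: "is_basis W bs" and B2: "is_basis W bs'"
    and C1: "\<And>c. lc c bs \<in> W" and C2: "\<And>c. lc c bs' \<in> W"
    and lin: "\<And>c. f (lc c bs) = lc c (map f bs)"
    and R1: "mat_repr bs f A" and R2: "mat_repr bs' f A'"
  shows "det A = det A'"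
proof -
  define n where "n = length bs"
  define n' where "n' = length bs'"
  have sub1: "set bs \<subseteq> W" and sub2: "set bs' \<subseteq> W" using B1 B2 unfolding is_basis_def by auto
  define P where "P = mat n n' (\<lambda>(i,j). (SOME c. bs'!j = lc c bs) i)"
  define Q where "Q = mat n' n (\<lambda>(i,j). (SOME c. bs!j = lc c bs') i)"
  have Pc: "P \<in> carrier_mat n n'" and Qc: "Q \<in> carrier_mat n' n" by (auto simp: P_def Q_def)
  have Pcol: "bs'!j = lc (\<lambda>i. P $$ (i,j)) bs" if j: "j < n'" for j
  proof -
    have "bs'!j \<in> W" using sub2 j n'_def by auto
    hence "\<exists>c. bs'!j = lc c bs" by (rule basis_exists[OF B1])
    hence "bs'!j = lc (SOME c. bs'!j = lc c bs) bs" by (rule someI_ex)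
    also have "\<dots> = lc (\<lambda>i. P $$ (i,j)) bs" by (rule lc_cong) (use j in \<open>auto simp: P_def n_def\<close>)
    finally show ?thesis .
  qed
  have Qcol: "bs!j = lc (\<lambda>i. Q $$ (i,j)) bs'" if j: "j < n" for j
  proof -
    have "bs!j \<in> W" using sub1 j n_def by auto
    hence "\<exists>c. bs!j = lc c bs'" by (rule basis_exists[OF B2])
    hence "bs!j = lc (SOME c. bs!j = lc c bs') bs'" by (rule someI_ex)
    also have "\<dots> = lc (\<lambda>i. Q $$ (i,j)) bs'" by (rule lc_cong) (use j in \<open>auto simp: Q_def n'_def\<close>)
    finally show ?thesis .
  qed
  have QP: "Q * P = 1\<^sub>m n'"
  proof (rule eq_matI)
    fix i j assume ij: "i < dim_row (1\<^sub>m n')" "j < dim_col (1\<^sub>m n')"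
    have 1: "bs'!j = lc (\<lambda>i. P $$ (i,j)) bs" by (rule Pcol) (use ij in simp)
    have 2: "lc (\<lambda>i. P $$ (i,j)) bs = lc (\<lambda>i. \<Sum>k<length bs. Q $$ (i,k) * P $$ (k,j)) bs'"
      by (rule lc_lc) (rule Qcol, simp add: n_def)
    have 3: "bs'!j = lc (\<lambda>i. if i = j then 1 else 0) bs'" using ij n'_def by (simp add: lc_delta)
    have 4: "lc (\<lambda>i. \<Sum>k<length bs. Q $$ (i,k) * P $$ (k,j)) bs' \<in> W" by (rule C2)
    have "(\<Sum>k<length bs. Q $$ (i,k) * P $$ (k,j)) = (if i = j then 1 else 0)"
      by (rule basis_unique[OF B2 4]) (use 1 2 3 ij n'_def in auto)
    thus "(Q * P) $$ (i,j) = 1\<^sub>m n' $$ (i,j)" using ij mult_entry[OF Qc Pc, of i j] n_def by simp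
  qed (use Qc Pc in auto)
  have PQ: "P * Q = 1\<^sub>m n"
  proof (rule eq_matI)
    fix i j assume ij: "i < dim_row (1\<^sub>m n)" "j < dim_col (1\<^sub>m n)"
    have 1: "bs!j = lc (\<lambda>i. Q $$ (i,j)) bs'" by (rule Qcol) (use ij in simp)
    have 2: "lc (\<lambda>i. Q $$ (i,j)) bs' = lc (\<lambda>i. \<Sum>k<length bs'. P $$ (i,k) * Q $$ (k,j)) bs"
      by (rule lc_lc) (rule Pcol, simp add: n'_def)
    have 3: "bs!j = lc (\<lambda>i. if i = j then 1 else 0) bs" using ij n_def by (simp add: lc_delta)
    have 4: "lc (\<lambda>i. \<Sum>k<length bs'. P $$ (i,k) * Q $$ (k,j)) bs \<in> W" by (rule C1)
    have "(\<Sum>k<length bs'. P $$ (i,k) * Q $$ (k,j)) = (if i = j then 1 else 0)"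
      by (rule basis_unique[OF B1 4]) (use 1 2 3 ij n_def in auto)
    thus "(P * Q) $$ (i,j) = 1\<^sub>m n $$ (i,j)" using ij mult_entry[OF Pc Qc, of i j] n'_def by simp
  qed (use Qc Pc in auto)
  have nn: "n = n'" using inverse_len[OF Pc Qc QP] inverse_len[OF Qc Pc PQ] by simp
  have Ac: "A \<in> carrier_mat n n" and Acol: "\<And>j. j < n \<Longrightarrow> f (bs!j) = lc (\<lambda>i. A $$ (i,j)) bs"
    using R1 unfolding mat_repr_lc n_def by auto
  have A'c: "A' \<in> carrier_mat n' n'" and A'col: "\<And>j. j < n' \<Longrightarrow> f (bs'!j) = lc (\<lambda>i. A' $$ (i,j)) bs'"
    using R2 unfolding mat_repr_lc n'_def by auto
  have APc: "A * P \<in> carrier_mat n n'" using Ac Pc by simp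
  have QAPc: "Q * (A * P) \<in> carrier_mat n' n'" using Qc APc by simp
  have eqA: "A' = Q * (A * P)"
  proof (rule eq_matI)
    fix i j assume ij: "i < dim_row (Q * (A * P))" "j < dim_col (Q * (A * P))"
    hence i: "i < n'" and j: "j < n'" using QAPc by auto
    have "f (bs'!j) = f (lc (\<lambda>i. P $$ (i,j)) bs)" using Pcol[OF j] by simp
    also have "\<dots> = lc (\<lambda>i. P $$ (i,j)) (map f bs)" by (rule lin)
    also have "\<dots> = lc (\<lambda>i. \<Sum>k<length (map f bs). A $$ (i,k) * P $$ (k,j)) bs"
      by (rule lc_lc) (simp add: Acol n_def)
    also have "\<dots> = lc (\<lambda>i. (A * P) $$ (i,j)) bs"
      by (rule lc_cong) (use j n_def nn mult_entry[OF Ac Pc] in simp)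
    also have "\<dots> = lc (\<lambda>i. \<Sum>k<length bs. Q $$ (i,k) * (A * P) $$ (k,j)) bs'"
      by (rule lc_lc) (rule Qcol, simp add: n_def)
    also have "\<dots> = lc (\<lambda>i. (Q * (A * P)) $$ (i,j)) bs'"
      by (rule lc_cong) (use j n'_def n_def nn mult_entry[OF Qc APc] in simp)
    finally have "lc (\<lambda>i. A' $$ (i,j)) bs' = lc (\<lambda>i. (Q * (A * P)) $$ (i,j)) bs'"
      using A'col[OF j] by simp
    thus "A' $$ (i,j) = (Q * (A * P)) $$ (i,j)"
      by (rule basis_unique[OF B2 C2]) (use i n'_def in simp)
  qed (use A'c QAPc in auto)
  have Qc': "Q \<in> carrier_mat n n" and Pc': "P \<in> carrier_mat n n" and APc': "A * P \<in> carrier_mat n n"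
    using Qc Pc APc nn by auto
  have "det A' = det Q * (det A * det P)"
    unfolding eqA using det_mult[OF Qc' APc'] det_mult[OF Ac Pc'] by simp
  also have "\<dots> = det A * det (Q * P)" using det_mult[OF Qc' Pc'] by simp
  also have "\<dots> = det A" using QP nn by simp
  finally show ?thesis by simp
qed



lemma nat_div_ge: "k*w \<le> (b::nat) \<Longrightarrow> w > 0 \<Longrightarrow> k \<le> b div w"
  by (simp add: less_eq_div_iff_mult_less_eq)
lemma nat_dm_div: "(b::nat) < w \<Longrightarrow> (q*w+b) div w = q" by simp
lemma nat_dm_mod: "(b::nat) < w \<Longrightarrow> (q*w+b) mod w = b" by simp
lemma nat_dm_inj: "(b::nat) < w \<Longrightarrow> b' < w \<Longrightarrow> q*w+b = q'*w+b' \<longleftrightarrow> q = q' \<and> b = b'"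
  by (metis nat_dm_div nat_dm_mod)
lemma nat_dm_less: "(a::nat) < n \<Longrightarrow> b < w \<Longrightarrow> a*w+b < n*w"
  by (metis nat_dm_div div_less_iff_less_mult less_zeroE neq0_conv)
lemma nat_div_less: "(x::nat) < n*w \<Longrightarrow> x div w < n" by (simp add: less_mult_imp_div_less)
lemma nat_div_less': "(x::nat) < n*w \<Longrightarrow> x div n < w" by (metis less_mult_imp_div_less mult.commute)
lemma nat_dm_range: "k*w \<le> (a::nat) \<Longrightarrow> a < k*w + w \<Longrightarrow> a div w = k \<and> a mod w = a - k*w"
proof -
  assume a: "k*w \<le> a" "a < k*w + w"
  define r where "r = a - k*w"
  have e: "a = k*w + r" and r: "r < w" using a by (auto simp: r_def)
  show ?thesis unfolding e using r by simp
qed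

definition bd :: "nat \<Rightarrow> nat \<Rightarrow> (nat \<Rightarrow> real mat) \<Rightarrow> real mat" where
  "bd k w Ms = mat (k*w) (k*w) (\<lambda>(a,b). if a div w = b div w then Ms (a div w) $$ (a mod w, b mod w) else 0)"

lemma bd_dims[simp]: "dim_row (bd k w Ms) = k*w" "dim_col (bd k w Ms) = k*w" by (simp_all add: bd_def)

lemma bd_carrier[simp]: "bd k w Ms \<in> carrier_mat (k*w) (k*w)" by (simp add: bd_def)

lemma bd_Suc:
  assumes w: "w > 0" and Mk: "Ms k \<in> carrier_mat w w"
  shows "bd (Suc k) w Ms = four_block_mat (bd k w Ms) (0\<^sub>m (k*w) w) (0\<^sub>m w (k*w)) (Ms k)"
proof (rule eq_matI)
  let ?F = "four_block_mat (bd k w Ms) (0\<^sub>m (k*w) w) (0\<^sub>m w (k*w)) (Ms k)"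
  fix a b assume ab: "a < dim_row ?F" "b < dim_col ?F"
  hence a: "a < k*w + w" and b: "b < k*w + w" using Mk bd_carrier[of k w Ms] by auto
  have F: "?F $$ (a,b) = (if a < k*w then if b < k*w then bd k w Ms $$ (a,b) else 0
      else if b < k*w then 0 else Ms k $$ (a - k*w, b - k*w))"
    using a b Mk by (simp add: index_mat_four_block)
  have L: "bd (Suc k) w Ms $$ (a,b) = (if a div w = b div w then Ms (a div w) $$ (a mod w, b mod w) else 0)"
    using a b by (simp add: bd_def)
  show "bd (Suc k) w Ms $$ (a,b) = ?F $$ (a,b)"
  proof (cases "a < k*w")
    case aT: True
    show ?thesis
    proof (cases "b < k*w")
      case True thus ?thesis using aT F L by (simp add: bd_def)
    next
      case False
      have "a div w < k" using aT by (rule nat_div_less)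
      moreover have "k \<le> b div w" using False w by (intro nat_div_ge) auto
      ultimately show ?thesis using aT False F L by simp
    qed
  next
    case aF: False
    have ad: "a div w = k \<and> a mod w = a - k*w" using aF a by (intro nat_dm_range) auto
    show ?thesis
    proof (cases "b < k*w")
      case True
      have "b div w < k" using True by (rule nat_div_less)
      thus ?thesis using aF True F L ad by simp
    next
      case False
      have bd': "b div w = k \<and> b mod w = b - k*w" using False b by (intro nat_dm_range) auto
      show ?thesis using aF False F L ad bd' by simp
    qed
  qed
qed (use Mk in auto)

lemma det_bd:
  assumes "\<And>i. i < k \<Longrightarrow> Ms i \<in> carrier_mat w w"
  shows "det (bd k w Ms) = (\<Prod>i<k. det (Ms i))"
  using assms
proof (induction k)
  case 0
  have "bd 0 w Ms \<in> carrier_mat 0 0" using bd_carrier[of 0 w Ms] by simp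
  thus ?case by simp
next
  case (Suc k)
  show ?case
  proof (cases "w = 0")
    case True
    have "bd (Suc k) w Ms \<in> carrier_mat 0 0" using bd_carrier[of "Suc k" w Ms] True by simp
    moreover have "det (Ms i) = 1" if "i < Suc k" for i using Suc.prems[OF that] True by simp
    ultimately show ?thesis by simp
  next
    case False
    have Mk: "Ms k \<in> carrier_mat w w" using Suc.prems by simp
    have eqS: "bd (Suc k) w Ms = four_block_mat (bd k w Ms) (0\<^sub>m (k*w) w) (0\<^sub>m w (k*w)) (Ms k)"
      using False Mk by (intro bd_Suc) auto
    have "det (bd (Suc k) w Ms) = det (bd k w Ms) * det (Ms k)"
      unfolding eqS using False Mk
      by (intro det_four_block_mat_lower_left_zero) auto
    also have "\<dots> = (\<Prod>i<k. det (Ms i)) * det (Ms k)" using Suc by simp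
    finally show ?thesis by simp
  qed
qed

lemma det_perm_mat:
  assumes s: "\<sigma> permutes {..<n}"
  shows "det (mat n n (\<lambda>(a,b). if \<sigma> a = b then 1 else 0)) = (signof \<sigma> :: real)"
proof -
  have s': "\<sigma> permutes {0..<n}" using s by (simp add: atLeast0LessThan)
  have "mat n n (\<lambda>(a,b). if \<sigma> a = b then 1 else 0) = mat n n (\<lambda>(i,j). (1\<^sub>m n :: real mat) $$ (\<sigma> i, j))"
    by (rule eq_matI) (use permutes_in_image[OF s] in auto)
  also have "det \<dots> = signof \<sigma> * det (1\<^sub>m n :: real mat)" by (rule det_permute_rows[OF _ s']) simp
  finally show ?thesis by simp
qed

lemma signof_sq: "(signof p :: real) * signof p = 1"
  by (metis of_int_1 of_int_mult sign_idempotent)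

lemma det_conj:
  fixes X :: "real mat"
  assumes t: "\<tau> permutes {..<n}" and X: "X \<in> carrier_mat n n"
  shows "det (mat n n (\<lambda>(a,b). X $$ (\<tau> a, \<tau> b))) = det X"
proof -
  have t': "\<tau> permutes {0..<n}" using t by (simp add: atLeast0LessThan)
  have ti: "\<And>i. i < n \<Longrightarrow> \<tau> i < n" using permutes_in_image[OF t] by auto
  define Y where "Y = mat n n (\<lambda>(a,b). X $$ (a, \<tau> b))"
  have Yc: "Y \<in> carrier_mat n n" by (simp add: Y_def)
  have "mat n n (\<lambda>(a,b). X $$ (\<tau> a, \<tau> b)) = mat n n (\<lambda>(i,j). Y $$ (\<tau> i, j))"
    by (rule eq_matI) (use ti in \<open>auto simp: Y_def\<close>)
  hence 1: "det (mat n n (\<lambda>(a,b). X $$ (\<tau> a, \<tau> b))) = signof \<tau> * det Y"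
    using det_permute_rows[OF Yc t'] by simp
  have "transpose_mat Y = mat n n (\<lambda>(i,j). transpose_mat X $$ (\<tau> i, j))"
    by (rule eq_matI) (use ti X in \<open>auto simp: Y_def\<close>)
  hence "det (transpose_mat Y) = signof \<tau> * det (transpose_mat X)"
    using det_permute_rows[of "transpose_mat X" n \<tau>] X t' by simp
  hence 2: "det Y = signof \<tau> * det X" using det_transpose[OF Yc] det_transpose[OF X] by simp
  show ?thesis unfolding 1 2 by (simp add: mult.assoc[symmetric] signof_sq)
qed

lemma permutes_finI:
  assumes "finite S" "\<And>x. x \<notin> S \<Longrightarrow> f x = x" "\<And>x. x \<in> S \<Longrightarrow> f x \<in> S" "inj_on f S"
  shows "f permutes S"
proof (rule bij_imp_permutes)
  have "f ` S = S" using assms by (intro endo_inj_surj) auto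
  thus "bij_betw f S S" using assms(4) by (simp add: bij_betw_def)
qed (use assms in auto)

definition tau :: "nat \<Rightarrow> nat \<Rightarrow> nat \<Rightarrow> nat" where
  "tau n w x = (if x < n*w then (x mod n)*w + x div n else x)"

lemma tau_permutes: "tau n w permutes {..<n*w}"
proof (rule permutes_finI)
  fix x assume "x \<in> {..<n*w}"
  hence x: "x < n*w" by simp
  hence n: "n > 0" by (cases n) auto
  show "tau n w x \<in> {..<n*w}" using x n by (simp add: tau_def nat_dm_less nat_div_less')
next
  show "inj_on (tau n w) {..<n * w}"
  proof (rule inj_onI)
    fix x y assume x: "x \<in> {..<n*w}" and y: "y \<in> {..<n*w}" and e: "tau n w x = tau n w y"
    have "x div n < w" "y div n < w" using x y by (auto simp: nat_div_less')
    hence "x mod n = y mod n \<and> x div n = y div n" using e x y by (simp add: tau_def nat_dm_inj)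
    thus "x = y" by (metis div_mult_mod_eq)
  qed
qed (auto simp: tau_def)

definition liftp :: "nat \<Rightarrow> nat \<Rightarrow> (nat \<Rightarrow> nat) \<Rightarrow> nat \<Rightarrow> nat" where
  "liftp n w \<sigma> x = (if x < n*w then \<sigma> (x div w) * w + x mod w else x)"

lemma liftp_permutes:
  assumes s: "\<sigma> permutes {..<n}"
  shows "liftp n w \<sigma> permutes {..<n*w}"
proof (rule permutes_finI)
  have si: "\<And>i. i < n \<Longrightarrow> \<sigma> i < n" using permutes_in_image[OF s] by auto
  fix x assume "x \<in> {..<n*w}"
  hence x: "x < n*w" by simp
  hence w: "w > 0" by (cases w) auto
  show "liftp n w \<sigma> x \<in> {..<n*w}" using x w si[OF nat_div_less[OF x]]
    by (simp add: liftp_def nat_dm_less)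
next
  show "inj_on (liftp n w \<sigma>) {..<n * w}"
  proof (rule inj_onI)
    fix x y assume x: "x \<in> {..<n*w}" and y: "y \<in> {..<n*w}" and e: "liftp n w \<sigma> x = liftp n w \<sigma> y"
    have w: "w > 0" using x by (cases w) auto
    have "\<sigma> (x div w) = \<sigma> (y div w) \<and> x mod w = y mod w" using e x y w by (simp add: liftp_def nat_dm_inj)
    hence "x div w = y div w \<and> x mod w = y mod w" using permutes_inj[OF s] by (simp add: inj_eq)
    thus "x = y" by (metis div_mult_mod_eq)
  qed
qed (auto simp: liftp_def)

lemma sign_liftp:
  assumes s: "\<sigma> permutes {..<n}"
  shows "(signof (liftp n w \<sigma>) :: real) = signof \<sigma> ^ w"
proof -
  let ?N = "n*w"
  let ?L = "liftp n w \<sigma>"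
  let ?t = "tau n w"
  have si: "\<And>i. i < n \<Longrightarrow> \<sigma> i < n" using permutes_in_image[OF s] by auto
  define X :: "real mat" where "X = mat ?N ?N (\<lambda>(a,b). if ?L a = b then 1 else 0)"
  have Xc: "X \<in> carrier_mat ?N ?N" by (simp add: X_def)
  have dX: "det X = signof ?L" unfolding X_def by (rule det_perm_mat[OF liftp_permutes[OF s]])
  define P :: "real mat" where "P = mat n n (\<lambda>(a,b). if \<sigma> a = b then 1 else 0)"
  have Pc: "P \<in> carrier_mat n n" by (simp add: P_def)
  have dP: "det P = signof \<sigma>" unfolding P_def by (rule det_perm_mat[OF s])
  have eq: "mat ?N ?N (\<lambda>(a,b). X $$ (?t a, ?t b)) = bd w n (\<lambda>_. P)"
  proof (rule eq_matI)
    fix a b assume "a < dim_row (bd w n (\<lambda>_. P))" "b < dim_col (bd w n (\<lambda>_. P))"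
    hence a: "a < n*w" and b: "b < n*w" by (auto simp: bd_def mult.commute)
    have n: "n > 0" using a by (cases n) auto
    have ad: "a div n < w" and bdv: "b div n < w" using a b by (auto simp: nat_div_less')
    have am: "a mod n < n" and bm: "b mod n < n" using n by auto
    have ta: "?t a = (a mod n)*w + a div n" and tb: "?t b = (b mod n)*w + b div n"
      using a b by (auto simp: tau_def)
    have tal: "?t a < n*w" and tbl: "?t b < n*w" using ta tb am bm ad bdv by (auto simp: nat_dm_less)
    have La: "?L (?t a) = \<sigma> (a mod n) * w + a div n"
      using tal ta ad by (simp add: liftp_def)
    have "X $$ (?t a, ?t b) = (if ?L (?t a) = ?t b then 1 else 0)" using tal tbl by (simp add: X_def)
    also have "\<dots> = (if \<sigma> (a mod n) = b mod n \<and> a div n = b div n then 1 else 0)"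
      unfolding La tb using ad bdv by (simp add: nat_dm_inj)
    also have "\<dots> = bd w n (\<lambda>_. P) $$ (a,b)"
      using a b am bm by (auto simp: bd_def P_def mult.commute)
    finally show "mat ?N ?N (\<lambda>(a,b). X $$ (?t a, ?t b)) $$ (a,b) = bd w n (\<lambda>_. P) $$ (a,b)"
      using a b by simp
  qed (auto simp: bd_def mult.commute)
  have "signof ?L = det (mat ?N ?N (\<lambda>(a,b). X $$ (?t a, ?t b)))"
    using det_conj[OF tau_permutes Xc] dX by simp
  also have "\<dots> = (\<Prod>i<w. det P)" unfolding eq by (rule det_bd) (use Pc in auto)
  finally show ?thesis using dP by simp
qed

lemma det_blockperm:
  fixes Ms :: "nat \<Rightarrow> real mat"
  assumes s: "\<sigma> permutes {..<n}" and Ms: "\<And>i. i < n \<Longrightarrow> Ms i \<in> carrier_mat w w"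
  shows "det (mat (n*w) (n*w) (\<lambda>(r,c). if r div w = \<sigma> (c div w) then Ms (r div w) $$ (r mod w, c mod w) else 0))
    = signof \<sigma> ^ w * (\<Prod>i<n. det (Ms i))"
proof (cases "w = 0")
  case True
  have "det (Ms i) = 1" if "i < n" for i using Ms[OF that] True by simp
  thus ?thesis using True by simp
next
  case False
  hence w: "w > 0" by simp
  let ?L = "liftp n w \<sigma>"
  define M where "M = mat (n*w) (n*w) (\<lambda>(r,c). if r div w = \<sigma> (c div w) then Ms (r div w) $$ (r mod w, c mod w) else 0)"
  have Mc: "M \<in> carrier_mat (n*w) (n*w)" by (simp add: M_def)
  have Lp: "?L permutes {0..<n*w}" using liftp_permutes[OF s] by (simp add: atLeast0LessThan)
  have si: "\<And>i. i < n \<Longrightarrow> \<sigma> i < n" using permutes_in_image[OF s] by auto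
  have eq: "mat (n*w) (n*w) (\<lambda>(r,c). M $$ (?L r, c)) = bd n w (\<lambda>i. Ms (\<sigma> i))"
  proof (rule eq_matI)
    fix r c assume "r < dim_row (bd n w (\<lambda>i. Ms (\<sigma> i)))" "c < dim_col (bd n w (\<lambda>i. Ms (\<sigma> i)))"
    hence r: "r < n*w" and c: "c < n*w" by (auto simp: bd_def)
    have rd: "r div w < n" using r by (rule nat_div_less)
    have rm: "r mod w < w" using w by simp
    have Lr: "?L r = \<sigma> (r div w) * w + r mod w" using r by (simp add: liftp_def)
    have Lrl: "?L r < n*w" unfolding Lr using si[OF rd] rm by (rule nat_dm_less)
    have "M $$ (?L r, c) = (if \<sigma> (r div w) = \<sigma> (c div w) then Ms (\<sigma> (r div w)) $$ (r mod w, c mod w) else 0)"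
      using Lrl c rm unfolding M_def by (simp add: Lr)
    also have "\<dots> = (if r div w = c div w then Ms (\<sigma> (r div w)) $$ (r mod w, c mod w) else 0)"
      using permutes_inj[OF s] by (simp add: inj_eq)
    finally show "mat (n*w) (n*w) (\<lambda>(r,c). M $$ (?L r, c)) $$ (r,c) = bd n w (\<lambda>i. Ms (\<sigma> i)) $$ (r,c)"
      using r c by (simp add: bd_def)
  qed (auto simp: bd_def)
  have "signof ?L * det M = det (bd n w (\<lambda>i. Ms (\<sigma> i)))"
    using det_permute_rows[OF Mc Lp] eq by simp
  also have "\<dots> = (\<Prod>i<n. det (Ms (\<sigma> i)))" by (rule det_bd) (use Ms si in auto)
  also have "\<dots> = (\<Prod>i<n. det (Ms i))"
    using prod.permute[OF s, of "\<lambda>i. det (Ms i)"] by (simp add: comp_def)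
  finally have "signof ?L * det M = (\<Prod>i<n. det (Ms i))" .
  hence "det M = signof ?L * (\<Prod>i<n. det (Ms i))"
    by (metis (no_types, lifting) mult.assoc mult_1 signof_sq)
  thus ?thesis unfolding M_def using sign_liftp[OF s, of w] by simp
qed



definition Cs :: "nat \<Rightarrow> (nat \<Rightarrow> nat) \<Rightarrow> real mat" where
  "Cs n \<sigma> = mat (n-1) (n-1) (\<lambda>(a,i). (if a = \<sigma> i then 1 else 0) - (if a = \<sigma> (n-1) then 1 else 0))"

lemma Cs_carrier[simp]: "Cs n \<sigma> \<in> carrier_mat (n-1) (n-1)" by (simp add: Cs_def)

lemma sum_perm_delta:
  fixes n :: nat
  assumes s: "\<sigma> permutes {..<n}" and a: "a < n"
  shows "(\<Sum>k<n. (if a = \<sigma> k then 1 else 0) * (g k :: real)) = g (Hilbert_Choice.inv \<sigma> a)"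
proof -
  have "(\<Sum>k<n. (if a = \<sigma> k then 1 else 0) * g k) = (\<Sum>k<n. if k = Hilbert_Choice.inv \<sigma> a then g k else 0)"
    by (intro sum.cong refl) (use permutes_inverses[OF s] in auto)
  also have "\<dots> = g (Hilbert_Choice.inv \<sigma> a)"
    using permutes_in_image[OF permutes_inv[OF s]] a by (simp add: sum.delta)
  finally show ?thesis .
qed

lemma sum_T_delta:
  assumes a: "a < Suc m"
  shows "(\<Sum>k<Suc m. ((if a = k then 1 else 0) - (if a = m \<and> k < m then 1 else 0)) * (g k :: real))
     = g a - (if a = m then (\<Sum>k<m. g k) else 0)"
proof -
  have "(\<Sum>k<Suc m. ((if a = k then 1 else 0) - (if a = m \<and> k < m then 1 else 0)) * g k)
    = (\<Sum>k<Suc m. (if k = a then g k else 0) - (if a = m \<and> k < m then g k else 0))"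
    by (intro sum.cong) auto
  also have "\<dots> = (\<Sum>k<Suc m. if k = a then g k else 0) - (\<Sum>k<Suc m. if a = m \<and> k < m then g k else 0)"
    by (rule sum_subtractf)
  also have "(\<Sum>k<Suc m. if k = a then g k else 0) = g a" using a by (simp add: sum.delta)
  also have "(\<Sum>k<Suc m. if a = m \<and> k < m then g k else 0) = (if a = m then (\<Sum>k<m. g k) else 0)"
    by (cases "a = m") simp_all
  finally show ?thesis .
qed

lemma sum_ind: "(\<Sum>k<(m::nat). if k = x then 1 else 0) = (if x < m then 1 else (0::real))"
  by (simp add: sum.delta)

lemma det_Cs:
  assumes s: "\<sigma> permutes {..<n}" and n: "1 \<le> n"
  shows "det (Cs n \<sigma>) = signof \<sigma>"
proof -
  define m where "m = n - 1"
  have nm: "n = Suc m" using n by (simp add: m_def)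
  have si: "\<And>i. i < n \<Longrightarrow> \<sigma> i < n" using permutes_in_image[OF s] by auto
  have sinj: "\<And>i j. \<sigma> i = \<sigma> j \<longleftrightarrow> i = j" using permutes_inj[OF s] by (simp add: inj_eq)
  have sinv: "\<And>a i. Hilbert_Choice.inv \<sigma> a = i \<longleftrightarrow> a = \<sigma> i" using permutes_inverses[OF s] by metis
  define U :: "real mat" where "U = mat m 1 (\<lambda>(k,_). if k = \<sigma> m then 1 else 0)"
  define F :: "real mat" where "F = mat n n (\<lambda>(k,i). if k < m then (if i < m then
       (if k = \<sigma> i then 1 else 0) - (if k = \<sigma> m then 1 else 0) else (if k = \<sigma> m then 1 else 0))
     else (if i < m then 0 else 1))"
  have Fc: "F \<in> carrier_mat n n" by (simp add: F_def)
  have F4: "F = four_block_mat (Cs n \<sigma>) U (0\<^sub>m 1 m) (1\<^sub>m 1)"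
    by (rule eq_matI) (auto simp: F_def U_def Cs_def nm)
  have dF: "det F = det (Cs n \<sigma>)"
    unfolding F4 by (subst det_four_block_mat_lower_left_zero[of _ m _ 1]) (auto simp: U_def Cs_def nm)
  define T :: "real mat" where "T = mat n n (\<lambda>(a,i). (if a = i then 1 else 0) - (if a = m \<and> i < m then 1 else 0))"
  have Tc: "T \<in> carrier_mat n n" by (simp add: T_def)
  have dT: "det T = 1"
  proof -
    have "det T = prod_list (diag_mat T)"
      by (rule det_lower_triangular[OF _ Tc]) (auto simp: T_def)
    also have "diag_mat T = map (\<lambda>_. 1) [0..<n]" by (auto simp: diag_mat_def T_def)
    also have "prod_list (map (\<lambda>_. (1::real)) [0..<n]) = 1" by (induction n) auto
    finally show ?thesis .
  qed
  define P :: "real mat" where "P = mat n n (\<lambda>(a,i). if a = \<sigma> i then 1 else 0)"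
  have Pc: "P \<in> carrier_mat n n" by (simp add: P_def)
  have dP: "det P = signof \<sigma>"
  proof -
    have "P = transpose_mat (mat n n (\<lambda>(a,b). if \<sigma> a = b then 1 else 0))"
      by (rule eq_matI) (auto simp: P_def)
    hence "det P = det (mat n n (\<lambda>(a,b). if \<sigma> a = b then 1 else (0::real)))"
      by (simp add: det_transpose[of _ n])
    also have "\<dots> = signof \<sigma>"
    proof -
      have s': "\<sigma> permutes {0..<n}" using s by (simp add: atLeast0LessThan)
      have "mat n n (\<lambda>(a,b). if \<sigma> a = b then 1 else 0) = mat n n (\<lambda>(i,j). (1\<^sub>m n :: real mat) $$ (\<sigma> i, j))"
        by (rule eq_matI) (use si in auto)
      also have "det \<dots> = signof \<sigma> * det (1\<^sub>m n :: real mat)" by (rule det_permute_rows[OF _ s']) simp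
      finally show ?thesis by simp
    qed
    finally show ?thesis .
  qed
  have PT: "P * T = T * F"
  proof (rule eq_matI)
    fix a i assume ai: "a < dim_row (T * F)" "i < dim_col (T * F)"
    hence a: "a < n" and i: "i < n" using Tc Fc by auto
    have L: "(P * T) $$ (a,i) = (if Hilbert_Choice.inv \<sigma> a = i then 1 else 0)
        - (if Hilbert_Choice.inv \<sigma> a = m \<and> i < m then 1 else 0)"
    proof -
      have "(P * T) $$ (a,i) = (\<Sum>k<n. P $$ (a,k) * T $$ (k,i))"
        using a i Pc Tc by (simp add: scalar_prod_def atLeast0LessThan)
      also have "\<dots> = (\<Sum>k<n. (if a = \<sigma> k then 1 else 0) * ((if k = i then 1 else 0) - (if k = m \<and> i < m then 1 else 0)))"
        by (intro sum.cong) (use a i in \<open>auto simp: P_def T_def\<close>)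
      also have "\<dots> = (if Hilbert_Choice.inv \<sigma> a = i then 1 else 0) - (if Hilbert_Choice.inv \<sigma> a = m \<and> i < m then 1 else 0)"
        by (rule sum_perm_delta[OF s a])
      finally show ?thesis .
    qed
    have R: "(T * F) $$ (a,i) = F $$ (a,i) - (if a = m then (\<Sum>k<m. F $$ (k,i)) else 0)"
    proof -
      have "(T * F) $$ (a,i) = (\<Sum>k<n. T $$ (a,k) * F $$ (k,i))"
        using a i Fc Tc by (simp add: scalar_prod_def atLeast0LessThan)
      also have "\<dots> = (\<Sum>k<Suc m. ((if a = k then 1 else 0) - (if a = m \<and> k < m then 1 else 0)) * F $$ (k,i))"
        by (intro sum.cong) (use a i nm in \<open>auto simp: T_def\<close>)
      also have "\<dots> = F $$ (a,i) - (if a = m then (\<Sum>k<m. F $$ (k,i)) else 0)"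
        by (rule sum_T_delta) (use a nm in simp)
      finally show ?thesis .
    qed
    have Fki: "(\<Sum>k<m. F $$ (k,i)) = (if i < m then (if \<sigma> i < m then 1 else 0) - (if \<sigma> m < m then 1 else 0)
       else (if \<sigma> m < m then 1 else 0))"
    proof -
      have "(\<Sum>k<m. F $$ (k,i)) = (\<Sum>k<m. if i < m then (if k = \<sigma> i then 1 else 0) - (if k = \<sigma> m then 1 else 0)
          else (if k = \<sigma> m then 1 else 0))"
        by (intro sum.cong) (use i nm in \<open>auto simp: F_def\<close>)
      also have "\<dots> = (if i < m then (if \<sigma> i < m then 1 else 0) - (if \<sigma> m < m then 1 else 0)
       else (if \<sigma> m < m then 1 else 0))"
        by (cases "i < m") (simp_all add: sum_subtractf sum.delta' eq_commute[of _ "\<sigma> _"])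
      finally show ?thesis .
    qed
    have Fai: "F $$ (a,i) = (if a < m then (if i < m then
       (if a = \<sigma> i then 1 else 0) - (if a = \<sigma> m then 1 else 0) else (if a = \<sigma> m then 1 else 0))
     else (if i < m then 0 else 1))" using a i by (simp add: F_def)
    have sim: "\<sigma> i < n" "\<sigma> m < n" using si i nm by auto
    have am: "a < m \<or> a = m" and im: "i < m \<or> i = m" and sim': "\<sigma> i < m \<or> \<sigma> i = m" "\<sigma> m < m \<or> \<sigma> m = m"
      using a i sim nm by auto
    show "(P * T) $$ (a,i) = (T * F) $$ (a,i)"
      unfolding L R Fki Fai sinv
      using am im sim' sinj[of i m] by (elim disjE) auto
  qed (use Pc Tc Fc in auto)
  have "det P * det T = det T * det F"
    using det_mult[OF Pc Tc] det_mult[OF Tc Fc] PT by metis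
  thus ?thesis using dT dP dF by simp
qed



lemma sum_lessThan_add: "(\<Sum>p<m+(b::nat). f p) = (\<Sum>p<m. f p) + (\<Sum>i<b. f (m+i))"
  by (induction b) (simp_all add: add.assoc)

lemma sum_split: "(\<Sum>p<(a::nat)*b. f p) = (\<Sum>j<a. \<Sum>i<b. f (j*b+i))"
proof (induction a)
  case (Suc a)
  have "(\<Sum>p<Suc a * b. f p) = (\<Sum>p<a*b + b. f p)" by (simp add: add.commute)
  also have "\<dots> = (\<Sum>p<a*b. f p) + (\<Sum>i<b. f (a*b+i))" by (rule sum_lessThan_add)
  finally show ?case using Suc by simp
qed simp

lemma lc_map: "lc c (map g [0..<N]) q = (\<Sum>p<N. c p * g p q)"
  by (simp add: lc_def)

lemma lc_append: "lc c (xs @ ys) q = lc c xs q + lc (\<lambda>k. c (length xs + k)) ys q"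
  unfolding lc_def by (simp add: sum_lessThan_add nth_append)

lemma lc_zero_coeff: "(\<And>i. i < length bs \<Longrightarrow> c i = 0) \<Longrightarrow> lc c bs q = 0"
  unfolding lc_def by simp

definition ev :: "nat list \<Rightarrow> nat list \<Rightarrow> real" where
  "ev a = (\<lambda>q. if q = a then 1 else 0)"

definition u :: "nat list \<Rightarrow> nat \<Rightarrow> nat \<Rightarrow> nat \<Rightarrow> nat list \<Rightarrow> real" where
  "u pre n i j = (\<lambda>q. ev (pre @ [i,j]) q - ev (pre @ [n-1, j]) q)"

definition onebasis :: "nat list \<Rightarrow> nat \<Rightarrow> nat \<Rightarrow> (nat list \<Rightarrow> real) list" where
  "onebasis pre n d = map (\<lambda>p. u pre n (p mod (n-1)) (p div (n-1))) [0..<(d-1)*(n-1)]"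

lemma length_onebasis[simp]: "length (onebasis pre n d) = (d-1)*(n-1)"
  by (simp add: onebasis_def)

lemma onebasis_nth: "p < (d-1)*(n-1) \<Longrightarrow> onebasis pre n d ! p = u pre n (p mod (n-1)) (p div (n-1))"
  by (simp add: onebasis_def)

lemma lc_onebasis_sum:
  "lc c (onebasis pre n d) q = (\<Sum>j<d-1. \<Sum>i<n-1. c (j*(n-1)+i) * u pre n i j q)"
proof -
  have "lc c (onebasis pre n d) q = (\<Sum>p<(d-1)*(n-1). c p * u pre n (p mod (n-1)) (p div (n-1)) q)"
    unfolding onebasis_def lc_map ..
  also have "\<dots> = (\<Sum>j<d-1. \<Sum>i<n-1. c (j*(n-1)+i) * u pre n ((j*(n-1)+i) mod (n-1)) ((j*(n-1)+i) div (n-1)) q)"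
    by (rule sum_split)
  also have "\<dots> = (\<Sum>j<d-1. \<Sum>i<n-1. c (j*(n-1)+i) * u pre n i j q)"
    by (intro sum.cong refl) simp
  finally show ?thesis .
qed

lemma lc_onebasis_a:
  assumes "i0 < n-1" "j0 < d-1"
  shows "lc c (onebasis pre n d) (pre @ [i0,j0]) = c (j0*(n-1)+i0)"
proof -
  have uv: "u pre n i j (pre @ [i0,j0]) = (if i = i0 \<and> j = j0 then 1 else 0)" if "i < n-1" for i j
    using assms that by (auto simp: u_def ev_def)
  have "(\<Sum>i<n-1. c (j*(n-1)+i) * u pre n i j (pre @ [i0,j0])) = (if j = j0 then c (j0*(n-1)+i0) else 0)" for j
  proof -
    have "(\<Sum>i<n-1. c (j*(n-1)+i) * u pre n i j (pre @ [i0,j0])) = (\<Sum>i<n-1. if i = i0 then (if j = j0 then c (j*(n-1)+i) else 0) else 0)"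
    proof (intro sum.cong refl)
      fix i assume "i \<in> {..<n-1}"
      hence "u pre n i j (pre @ [i0,j0]) = (if i = i0 \<and> j = j0 then 1 else 0)" using uv by simp
      thus "c (j*(n-1)+i) * u pre n i j (pre @ [i0,j0]) = (if i = i0 then (if j = j0 then c (j*(n-1)+i) else 0) else 0)" by simp
    qed
    also have "\<dots> = (if j = j0 then c (j0*(n-1)+i0) else 0)" using assms by simp
    finally show ?thesis .
  qed
  hence "lc c (onebasis pre n d) (pre @ [i0,j0]) = (\<Sum>j<d-1. if j = j0 then c (j0*(n-1)+i0) else 0)"
    unfolding lc_onebasis_sum by simp
  also have "\<dots> = c (j0*(n-1)+i0)" using assms by simp
  finally show ?thesis .
qed

lemma lc_onebasis_b:
  assumes "j0 < d-1"
  shows "lc c (onebasis pre n d) (pre @ [n-1,j0]) = - (\<Sum>i<n-1. c (j0*(n-1)+i))"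
proof -
  have uv: "u pre n i j (pre @ [n-1,j0]) = (if j = j0 then -1 else 0)" if "i < n-1" for i j
    using assms that by (auto simp: u_def ev_def)
  have "(\<Sum>i<n-1. c (j*(n-1)+i) * u pre n i j (pre @ [n-1,j0])) = (if j = j0 then - (\<Sum>i<n-1. c (j0*(n-1)+i)) else 0)" for j
  proof -
    have "(\<Sum>i<n-1. c (j*(n-1)+i) * u pre n i j (pre @ [n-1,j0])) = (\<Sum>i<n-1. if j = j0 then - c (j*(n-1)+i) else 0)"
    proof (intro sum.cong refl)
      fix i assume "i \<in> {..<n-1}"
      hence "u pre n i j (pre @ [n-1,j0]) = (if j = j0 then -1 else 0)" using uv by simp
      thus "c (j*(n-1)+i) * u pre n i j (pre @ [n-1,j0]) = (if j = j0 then - c (j*(n-1)+i) else 0)" by simp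
    qed
    also have "\<dots> = (if j = j0 then - (\<Sum>i<n-1. c (j0*(n-1)+i)) else 0)" by (simp add: sum_negf)
    finally show ?thesis .
  qed
  hence "lc c (onebasis pre n d) (pre @ [n-1,j0]) = (\<Sum>j<d-1. if j = j0 then - (\<Sum>i<n-1. c (j0*(n-1)+i)) else 0)"
    unfolding lc_onebasis_sum by simp
  also have "\<dots> = - (\<Sum>i<n-1. c (j0*(n-1)+i))" using assms by simp
  finally show ?thesis .
qed

lemma lc_onebasis_c:
  assumes "\<And>i j. i < n \<Longrightarrow> j < d-1 \<Longrightarrow> q \<noteq> pre @ [i,j]" and "n \<ge> 1"
  shows "lc c (onebasis pre n d) q = 0"
proof -
  have "u pre n i j q = 0" if "i < n-1" "j < d-1" for i j
    using assms(1)[of i j] assms(1)[of "n-1" j] that assms(2) by (auto simp: u_def ev_def)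
  thus ?thesis unfolding lc_onebasis_sum by simp
qed

definition emb :: "nat \<Rightarrow> (nat list \<Rightarrow> real) \<Rightarrow> nat list \<Rightarrow> real" where
  "emb i y = (\<lambda>c. if 2 \<le> length c \<and> c!0 = 0 \<and> c!1 = i then y (drop 2 c) else 0)"

lemma emb_cons[simp]: "emb i y (0 # a # q) = (if a = i then y q else 0)"
  by (simp add: emb_def)

lemma emb_other: "\<not> (\<exists>a q'. q = 0 # a # q') \<Longrightarrow> emb i y q = 0"
  unfolding emb_def by (cases q; cases "tl q") (auto)

definition blk :: "nat \<Rightarrow> (nat list \<Rightarrow> real) list \<Rightarrow> (nat list \<Rightarrow> real) list" where
  "blk n B = map (\<lambda>p. emb (p div length B) (B ! (p mod length B))) [0..<n * length B]"

lemma length_blk[simp]: "length (blk n B) = n * length B" by (simp add: blk_def)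

lemma lc_blk_sum: "lc c (blk n B) q = (\<Sum>i<n. \<Sum>k<length B. c (i * length B + k) * emb i (B!k) q)"
proof -
  have "lc c (blk n B) q = (\<Sum>p<n * length B. c p * emb (p div length B) (B ! (p mod length B)) q)"
    unfolding blk_def lc_map ..
  also have "\<dots> = (\<Sum>i<n. \<Sum>k<length B. c (i * length B + k) * emb ((i * length B + k) div length B) (B ! ((i * length B + k) mod length B)) q)"
    by (rule sum_split)
  also have "\<dots> = (\<Sum>i<n. \<Sum>k<length B. c (i * length B + k) * emb i (B!k) q)"
    by (intro sum.cong refl) (simp add: nat_dm_div nat_dm_mod)
  finally show ?thesis .
qed

lemma lc_blk_a:
  assumes "i0 < n"
  shows "lc c (blk n B) (0 # i0 # q') = lc (\<lambda>k. c (i0 * length B + k)) B q'"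
proof -
  have "lc c (blk n B) (0 # i0 # q') = (\<Sum>i<n. if i = i0 then (\<Sum>k<length B. c (i * length B + k) * (B!k) q') else 0)"
    unfolding lc_blk_sum by (intro sum.cong refl) auto
  also have "\<dots> = lc (\<lambda>k. c (i0 * length B + k)) B q'" using assms by (simp add: lc_def)
  finally show ?thesis .
qed

lemma lc_blk_b:
  assumes "\<not> (\<exists>a q'. q = 0 # a # q' \<and> a < n)"
  shows "lc c (blk n B) q = 0"
proof -
  have "emb i y q = 0" if "i < n" for i y
    using assms that by (cases "\<exists>a q'. q = 0 # a # q'") (auto simp: emb_other)
  thus ?thesis unfolding lc_blk_sum by simp
qed

fun Bas :: "nat \<Rightarrow> nat list \<Rightarrow> (nat list \<Rightarrow> real) list" where
  "Bas d [] = []"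
| "Bas d [n] = onebasis [] n d"
| "Bas d (n # m # r) = blk n (Bas d (m # r)) @ onebasis [1] n d"

definition C1 :: "nat \<Rightarrow> nat \<Rightarrow> (nat \<Rightarrow> nat) \<Rightarrow> real mat" where
  "C1 n d \<sigma> = bd (d-1) (n-1) (\<lambda>_. Cs n \<sigma>)"

lemma C1_carrier[simp]: "C1 n d \<sigma> \<in> carrier_mat ((d-1)*(n-1)) ((d-1)*(n-1))"
  by (simp add: C1_def)

definition Mblk :: "nat \<Rightarrow> nat \<Rightarrow> (nat \<Rightarrow> real mat) \<Rightarrow> (nat \<Rightarrow> nat) \<Rightarrow> real mat" where
  "Mblk n w Ms \<sigma> = mat (n*w) (n*w) (\<lambda>(r,c). if r div w = \<sigma> (c div w) then Ms (r div w) $$ (r mod w, c mod w) else 0)"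

primrec Mof :: "nat \<Rightarrow> nat list \<Rightarrow> wr \<Rightarrow> real mat" where
  "Mof d rs (Base \<sigma>) = C1 (hd rs) d \<sigma>"
| "Mof d rs (Node G \<sigma>) = four_block_mat
     (Mblk (hd rs) (length (Bas d (tl rs))) (\<lambda>i. Mof d (tl rs) (G i)) \<sigma>)
     (0\<^sub>m (hd rs * length (Bas d (tl rs))) ((d-1)*(hd rs - 1)))
     (0\<^sub>m ((d-1)*(hd rs - 1)) (hd rs * length (Bas d (tl rs))))
     (C1 (hd rs) d \<sigma>)"

lemma act_lin: "act S (\<lambda>p. \<Sum>i<k. c i * g i p) = (\<lambda>p. \<Sum>i<k. c i * act S (g i) p)"
proof (induction S arbitrary: g)
  case (Base \<sigma>)
  show ?case by (rule ext) simp
next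
  case (Node G \<sigma>)
  show ?case
  proof (rule ext)
    fix q
    show "act (Node G \<sigma>) (\<lambda>p. \<Sum>i<k. c i * g i p) q = (\<Sum>i<k. c i * act (Node G \<sigma>) (g i) q)"
    proof (cases "2 \<le> length q \<and> q ! 0 = 0")
      case True
      have "act (Node G \<sigma>) (\<lambda>p. \<Sum>i<k. c i * g i p) q
        = act (G (q!1)) (\<lambda>c''. \<Sum>i<k. c i * g i (0 # Hilbert_Choice.inv \<sigma> (q!1) # c'')) (drop 2 q)"
        using True by simp
      also have "\<dots> = (\<Sum>i<k. c i * act (G (q!1)) (\<lambda>c''. g i (0 # Hilbert_Choice.inv \<sigma> (q!1) # c'')) (drop 2 q))"
      proof -
        have "act (G (q!1)) (\<lambda>p. \<Sum>i<k. c i * (\<lambda>i c''. g i (0 # Hilbert_Choice.inv \<sigma> (q!1) # c'')) i p)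
          = (\<lambda>p. \<Sum>i<k. c i * act (G (q!1)) ((\<lambda>i c''. g i (0 # Hilbert_Choice.inv \<sigma> (q!1) # c'')) i) p)"
          by (rule Node.IH) simp
        thus ?thesis by simp
      qed
      finally show ?thesis using True by simp
    next
      case False
      have e: "\<And>X. act (Node G \<sigma>) X q = (if length q = 3 \<and> q!0 = 1 then X [1, Hilbert_Choice.inv \<sigma> (q!1), q!2] else 0)"
        using False by auto
      show ?thesis
      proof (cases "length q = 3 \<and> q ! 0 = 1")
        case True thus ?thesis unfolding e by simp
      next
        case F3: False
        show ?thesis unfolding e by (simp only: if_not_P[OF F3]) simp
      qed
    qed
  qed
qed

lemma act_zero: "act S (\<lambda>_. 0) = (\<lambda>_. 0)"
  using act_lin[where S=S and k=0 and c="\<lambda>_. 0" and g="\<lambda>_ _. 0"] by simp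

lemma act_lc: "act S (lc c bs) = lc c (map (act S) bs)"
  unfolding lc_def using act_lin[where S=S and c=c and k="length bs" and g="\<lambda>i. bs!i"] by simp

lemma act_emb:
  assumes s: "\<sigma> permutes {..<n}"
  shows "act (Node G \<sigma>) (emb i y) = emb (\<sigma> i) (act (G (\<sigma> i)) y)"
proof (rule ext)
  fix q
  have inv: "\<And>a. Hilbert_Choice.inv \<sigma> a = i \<longleftrightarrow> a = \<sigma> i" using permutes_inverses[OF s] by metis
  show "act (Node G \<sigma>) (emb i y) q = emb (\<sigma> i) (act (G (\<sigma> i)) y) q"
  proof (cases "2 \<le> length q \<and> q ! 0 = 0")
    case True
    then obtain a q' where q: "q = 0 # a # q'" by (cases q; cases "tl q") auto
    have "act (Node G \<sigma>) (emb i y) q = act (G a) (\<lambda>c''. emb i y (0 # Hilbert_Choice.inv \<sigma> a # c'')) q'"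
      unfolding q by simp
    also have "\<dots> = emb (\<sigma> i) (act (G (\<sigma> i)) y) q"
    proof (cases "a = \<sigma> i")
      case True
      hence "(\<lambda>c''. emb i y (0 # Hilbert_Choice.inv \<sigma> a # c'')) = y" using inv by auto
      thus ?thesis unfolding q using True by simp
    next
      case False
      hence "(\<lambda>c''. emb i y (0 # Hilbert_Choice.inv \<sigma> a # c'')) = (\<lambda>_. 0)" using inv by auto
      thus ?thesis unfolding q using False by (simp add: act_zero)
    qed
    finally show ?thesis .
  next
    case False
    thus ?thesis by (auto simp: emb_def)
  qed
qed

lemma act_u1:
  assumes s: "\<sigma> permutes {..<n}"
  shows "act (Node G \<sigma>) (u [1] n i j) = (\<lambda>q. ev [1, \<sigma> i, j] q - ev [1, \<sigma> (n-1), j] q)"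
proof (rule ext)
  fix q
  have inv: "\<And>a i. Hilbert_Choice.inv \<sigma> a = i \<longleftrightarrow> a = \<sigma> i" using permutes_inverses[OF s] by metis
  show "act (Node G \<sigma>) (u [1] n i j) q = ev [1, \<sigma> i, j] q - ev [1, \<sigma> (n-1), j] q"
  proof (cases "2 \<le> length q \<and> q ! 0 = 0")
    case True
    have "(\<lambda>c''. u [1] n i j (0 # Hilbert_Choice.inv \<sigma> (q!1) # c'')) = (\<lambda>_. 0)"
      by (auto simp: u_def ev_def)
    moreover have "ev [1, a, b] q = 0" for a b using True by (auto simp: ev_def)
    ultimately show ?thesis using True by (simp add: act_zero)
  next
    case False
    show ?thesis
    proof (cases "length q = 3 \<and> q ! 0 = 1")
      case True
      then obtain a b where q: "q = [1, a, b]"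
        by (cases q; cases "tl q"; cases "tl (tl q)") auto
      show ?thesis unfolding q using inv by (simp add: u_def ev_def)
    next
      case False2: False
      have "ev [1, a, b] q = 0" for a b using False2 by (auto simp: ev_def)
      moreover have "\<And>X. act (Node G \<sigma>) X q = 0" using False False2 by auto
      ultimately show ?thesis by simp
    qed
  qed
qed

lemma act_u0:
  assumes s: "\<sigma> permutes {..<n}"
  shows "act (Base \<sigma>) (u [] n i j) = (\<lambda>q. ev [\<sigma> i, j] q - ev [\<sigma> (n-1), j] q)"
proof (rule ext)
  fix q
  have inv: "\<And>a i. Hilbert_Choice.inv \<sigma> a = i \<longleftrightarrow> a = \<sigma> i" using permutes_inverses[OF s] by metis
  show "act (Base \<sigma>) (u [] n i j) q = ev [\<sigma> i, j] q - ev [\<sigma> (n-1), j] q"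
  proof (cases "length q = 2")
    case True
    then obtain a b where q: "q = [a, b]"
      by (cases q; cases "tl q") auto
    show ?thesis unfolding q using inv by (simp add: u_def ev_def)
  next
    case False
    thus ?thesis by (auto simp: ev_def)
  qed
qed



lemma sum_nonzero_ex: "(\<Sum>i<k. f i) \<noteq> (0::real) \<Longrightarrow> \<exists>i<k. f i \<noteq> 0"
  by (metis lessThan_iff sum.neutral)

lemma Wsp_single: "x \<in> Wsp d [n] \<longleftrightarrow> (\<forall>c. x c \<noteq> 0 \<longrightarrow> (\<exists>i j. c = [i, j] \<and> i < n \<and> j < d - 1))
      \<and> (\<forall>j<d - 1. (\<Sum>i<n. x [i, j]) = 0)" by simp

lemma Wsp_cons: "x \<in> Wsp d (n # m # r) \<longleftrightarrow> (\<forall>c. x c \<noteq> 0 \<longrightarrow>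
         ((\<exists>i c'. c = 0 # i # c' \<and> i < n) \<or> (\<exists>i j. c = [1, i, j] \<and> i < n \<and> j < d - 1)))
      \<and> (\<forall>j<d - 1. (\<Sum>i<n. x [1, i, j]) = 0)
      \<and> (\<forall>i<n. (\<lambda>c'. x (0 # i # c')) \<in> Wsp d (m # r))" by simp

lemma sum_swap_lin: "(\<Sum>i<n. \<Sum>l<k. c l * g l (f i)) = (\<Sum>l<k. c l * (\<Sum>i<n. g l (f i) :: real))"
  by (subst sum.swap) (simp add: sum_distrib_left)

lemma Wsp_lin:
  assumes "rs \<noteq> []" and "\<And>i. i < k \<Longrightarrow> g i \<in> Wsp d rs"
  shows "(\<lambda>p. \<Sum>i<k. c i * g i p) \<in> Wsp d rs"
  using assms
proof (induction d rs arbitrary: g rule: Bas.induct)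
  case (1 d) thus ?case by simp
next
  case (2 d n)
  have G: "\<And>i. i < k \<Longrightarrow> g i \<in> Wsp d [n]" using 2 by simp
  show ?case unfolding Wsp_single
  proof (intro conjI allI impI)
    fix q assume "(\<Sum>i<k. c i * g i q) \<noteq> 0"
    then obtain i where i: "i < k" "c i * g i q \<noteq> 0" using sum_nonzero_ex by blast
    hence "g i q \<noteq> 0" by auto
    thus "\<exists>i j. q = [i, j] \<and> i < n \<and> j < d - 1" using G[OF i(1)] unfolding Wsp_single by blast
  next
    fix j assume j: "j < d - 1"
    have "(\<Sum>i'<n. \<Sum>i<k. c i * g i [i', j]) = (\<Sum>i<k. c i * (\<Sum>i'<n. g i [i', j]))"
      by (rule sum_swap_lin)
    also have "\<dots> = 0" using G j unfolding Wsp_single by simp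
    finally show "(\<Sum>i'<n. \<Sum>i<k. c i * g i [i', j]) = 0" .
  qed
next
  case (3 d n m r)
  have G: "\<And>i. i < k \<Longrightarrow> g i \<in> Wsp d (n # m # r)" using 3 by simp
  show ?case unfolding Wsp_cons
  proof (intro conjI allI impI)
    fix q assume "(\<Sum>i<k. c i * g i q) \<noteq> 0"
    then obtain i where i: "i < k" "c i * g i q \<noteq> 0" using sum_nonzero_ex by blast
    hence "g i q \<noteq> 0" by auto
    thus "(\<exists>i c'. q = 0 # i # c' \<and> i < n) \<or> (\<exists>i j. q = [1, i, j] \<and> i < n \<and> j < d - 1)"
      using G[OF i(1)] unfolding Wsp_cons by blast
  next
    fix j assume j: "j < d - 1"
    have "(\<Sum>i'<n. \<Sum>i<k. c i * g i [1, i', j]) = (\<Sum>i<k. c i * (\<Sum>i'<n. g i [1, i', j]))"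
      by (rule sum_swap_lin)
    also have "\<dots> = 0" using G j unfolding Wsp_cons by simp
    finally show "(\<Sum>i'<n. \<Sum>i<k. c i * g i [1, i', j]) = 0" .
  next
    fix i' assume i': "i' < n"
    have "(\<lambda>p. \<Sum>i<k. c i * (\<lambda>l c'. g l (0 # i' # c')) i p) \<in> Wsp d (m # r)"
      by (rule 3(1)) (use G i' in \<open>auto simp: Wsp_cons\<close>)
    thus "(\<lambda>c'. \<Sum>i<k. c i * g i (0 # i' # c')) \<in> Wsp d (m # r)" by simp
  qed
qed

lemma Wsp_zero: "rs \<noteq> [] \<Longrightarrow> (\<lambda>_. 0) \<in> Wsp d rs"
proof -
  assume rs: "rs \<noteq> []"
  have "(\<lambda>p. \<Sum>i<(0::nat). (\<lambda>_. 0::real) i * (\<lambda>_ _. 0::real) i p) \<in> Wsp d rs"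
    by (rule Wsp_lin) (use rs in auto)
  thus ?thesis by simp
qed

lemma Wsp_lc: "rs \<noteq> [] \<Longrightarrow> set bs \<subseteq> Wsp d rs \<Longrightarrow> lc c bs \<in> Wsp d rs"
  unfolding lc_def by (rule Wsp_lin) auto

lemma u_colsum: "i < n \<Longrightarrow> (\<Sum>i'<n. u pre n i j (pre @ [i', j'])) = 0"
proof -
  assume i: "i < n"
  have "(\<Sum>i'<n. u pre n i j (pre @ [i', j'])) = (\<Sum>i'<n. (if i' = i then (if j = j' then 1 else 0) else 0) - (if i' = n-1 then (if j = j' then 1 else 0) else 0))"
    by (intro sum.cong refl) (auto simp: u_def ev_def)
  also have "\<dots> = 0" using i by (simp add: sum_subtractf)
  finally show ?thesis .
qed

lemma u_in_single: "i < n - 1 \<Longrightarrow> j < d - 1 \<Longrightarrow> u [] n i j \<in> Wsp d [n]"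
  unfolding Wsp_single
proof (intro conjI allI impI)
  fix q assume "i < n - 1" "j < d - 1" "u [] n i j q \<noteq> 0"
  thus "\<exists>i j. q = [i, j] \<and> i < n \<and> j < d - 1" by (auto simp: u_def ev_def split: if_splits)
next
  fix j' assume "i < n - 1"
  thus "(\<Sum>i'<n. u [] n i j [i', j']) = 0" using u_colsum[of i n "[]" j j'] by simp
qed

lemma u_in_cons: "i < n - 1 \<Longrightarrow> j < d - 1 \<Longrightarrow> m # r \<noteq> [] \<Longrightarrow> u [1] n i j \<in> Wsp d (n # m # r)"
  unfolding Wsp_cons
proof (intro conjI allI impI)
  fix q assume "i < n - 1" "j < d - 1" "u [1] n i j q \<noteq> 0"
  thus "(\<exists>i c'. q = 0 # i # c' \<and> i < n) \<or> (\<exists>i' j'. q = [1, i', j'] \<and> i' < n \<and> j' < d - 1)"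
    by (auto simp: u_def ev_def split: if_splits)
next
  fix j' assume "i < n - 1"
  thus "(\<Sum>i'<n. u [1] n i j [1, i', j']) = 0" using u_colsum[of i n "[1]" j j'] by simp
next
  fix i' assume "i' < n"
  have "(\<lambda>c'. u [1] n i j (0 # i' # c')) = (\<lambda>_. 0)" by (auto simp: u_def ev_def)
  thus "(\<lambda>c'. u [1] n i j (0 # i' # c')) \<in> Wsp d (m # r)" using Wsp_zero by simp
qed

lemma emb_in_cons: "i < n \<Longrightarrow> b \<in> Wsp d (m # r) \<Longrightarrow> emb i b \<in> Wsp d (n # m # r)"
  unfolding Wsp_cons
proof (intro conjI allI impI)
  fix q assume "i < n" "emb i b q \<noteq> 0"
  thus "(\<exists>i c'. q = 0 # i # c' \<and> i < n) \<or> (\<exists>i' j'. q = [1, i', j'] \<and> i' < n \<and> j' < d - 1)"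
    by (cases "\<exists>a q'. q = 0 # a # q'") (auto simp: emb_other split: if_splits)
next
  fix j' show "(\<Sum>i'<n. emb i b [1, i', j']) = 0" by (simp add: emb_def)
next
  fix i' assume "i' < n" "b \<in> Wsp d (m # r)"
  thus "(\<lambda>c'. emb i b (0 # i' # c')) \<in> Wsp d (m # r)" using Wsp_zero[of "m # r" d] by (cases "i' = i") auto
qed

definition good :: "nat list \<Rightarrow> bool" where
  "good rs \<longleftrightarrow> rs \<noteq> [] \<and> (\<forall>x\<in>set rs. 2 \<le> x)"

lemma good_single[simp]: "good [n] \<longleftrightarrow> 2 \<le> n" by (simp add: good_def)
lemma good_cons[simp]: "good (n # m # r) \<longleftrightarrow> 2 \<le> n \<and> good (m # r)" by (auto simp: good_def)

lemma Bas_sub: "good rs \<Longrightarrow> set (Bas d rs) \<subseteq> Wsp d rs"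
proof (induction d rs rule: Bas.induct)
  case (1 d) thus ?case by (simp add: good_def)
next
  case (2 d n)
  show ?case
  proof
    fix b assume "b \<in> set (Bas d [n])"
    then obtain p where p: "p < (d-1)*(n-1)" "b = u [] n (p mod (n-1)) (p div (n-1))"
      by (auto simp: onebasis_def)
    have "n - 1 > 0" using 2 by simp
    hence "p mod (n-1) < n-1" by simp
    moreover have "p div (n-1) < d-1" using p(1) by (rule nat_div_less)
    ultimately show "b \<in> Wsp d [n]" using p(2) u_in_single by simp
  qed
next
  case (3 d n m r)
  have IH: "set (Bas d (m # r)) \<subseteq> Wsp d (m # r)" using 3 by simp
  show ?case
  proof
    fix b assume "b \<in> set (Bas d (n # m # r))"
    hence "b \<in> set (blk n (Bas d (m # r))) \<or> b \<in> set (onebasis [1] n d)" by simp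
    thus "b \<in> Wsp d (n # m # r)"
    proof
      assume "b \<in> set (blk n (Bas d (m # r)))"
      then obtain p where p: "p < n * length (Bas d (m # r))"
        "b = emb (p div length (Bas d (m # r))) (Bas d (m # r) ! (p mod length (Bas d (m # r))))"
        by (auto simp: blk_def)
      have w: "length (Bas d (m # r)) > 0" using p(1) by (cases "length (Bas d (m # r))") auto
      have "p div length (Bas d (m # r)) < n" using p(1) by (rule nat_div_less)
      moreover have "Bas d (m # r) ! (p mod length (Bas d (m # r))) \<in> Wsp d (m # r)"
        using IH w by (simp add: subset_iff)
      ultimately show ?thesis using p(2) emb_in_cons by simp
    next
      assume "b \<in> set (onebasis [1] n d)"
      then obtain p where p: "p < (d-1)*(n-1)" "b = u [1] n (p mod (n-1)) (p div (n-1))"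
        by (auto simp: onebasis_def)
      have "n - 1 > 0" using 3 by simp
      hence "p mod (n-1) < n-1" by simp
      moreover have "p div (n-1) < d-1" using p(1) by (rule nat_div_less)
      ultimately show ?thesis using p(2) u_in_cons by simp
    qed
  qed
qed

lemma onepart_span:
  assumes n: "2 \<le> n" and cs: "(\<Sum>i<n. x (pre @ [i, j])) = 0" and i: "i < n" and j: "j < d - 1"
  shows "lc (\<lambda>p. x (pre @ [p mod (n-1), p div (n-1)])) (onebasis pre n d) (pre @ [i, j]) = x (pre @ [i, j])"
proof (cases "i < n - 1")
  case True
  have "(j * (n-1) + i) mod (n-1) = i" "(j * (n-1) + i) div (n-1) = j" using True by simp_all
  thus ?thesis using lc_onebasis_a[OF True j] by simp
next
  case False
  hence i': "i = n - 1" using i by simp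
  have e: "\<And>i. i < n - 1 \<Longrightarrow> (j * (n-1) + i) mod (n-1) = i \<and> (j * (n-1) + i) div (n-1) = j" by simp
  have "lc (\<lambda>p. x (pre @ [p mod (n-1), p div (n-1)])) (onebasis pre n d) (pre @ [n-1, j])
     = - (\<Sum>i<n-1. x (pre @ [(j * (n-1) + i) mod (n-1), (j * (n-1) + i) div (n-1)]))"
    using lc_onebasis_b[OF j] by simp
  also have "\<dots> = - (\<Sum>i<n-1. x (pre @ [i, j]))" by (intro arg_cong[where f=uminus] sum.cong refl) (simp add: e)
  also have "\<dots> = x (pre @ [n-1, j])"
  proof -
    have "n = Suc (n-1)" using n by simp
    hence "(\<Sum>i<n. x (pre @ [i, j])) = (\<Sum>i<n-1. x (pre @ [i, j])) + x (pre @ [n-1, j])"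
      by (metis sum.lessThan_Suc)
    thus ?thesis using cs by simp
  qed
  finally show ?thesis using i' by simp
qed

lemma Bas_span: "good rs \<Longrightarrow> x \<in> Wsp d rs \<Longrightarrow> \<exists>c. x = lc c (Bas d rs)"
proof (induction d rs arbitrary: x rule: Bas.induct)
  case (1 d) thus ?case by (simp add: good_def)
next
  case (2 d n)
  have n: "2 \<le> n" using 2 by simp
  have X: "\<forall>c. x c \<noteq> 0 \<longrightarrow> (\<exists>i j. c = [i, j] \<and> i < n \<and> j < d - 1)" "\<forall>j<d - 1. (\<Sum>i<n. x [i, j]) = 0"
    using 2 unfolding Wsp_single by auto
  define c where "c = (\<lambda>p. x ([] @ [p mod (n-1), p div (n-1)]))"
  have "x = lc c (Bas d [n])"
  proof (rule ext)
    fix q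
    show "x q = lc c (Bas d [n]) q"
    proof (cases "\<exists>i j. q = [i, j] \<and> i < n \<and> j < d - 1")
      case True
      then obtain i j where q: "q = [] @ [i, j]" "i < n" "j < d - 1" by auto
      show ?thesis unfolding q(1) c_def using onepart_span[OF n _ q(2,3), of x "[]"] X(2) q by simp
    next
      case False
      hence "x q = 0" using X(1) by blast
      moreover have "lc c (onebasis [] n d) q = 0" by (rule lc_onebasis_c) (use False n in auto)
      ultimately show ?thesis by simp
    qed
  qed
  thus ?case by blast
next
  case (3 d n m r)
  define B where "B = Bas d (m # r)"
  define w where "w = length B"
  have n: "2 \<le> n" and g: "good (m # r)" using 3 by auto
  have X: "\<forall>c. x c \<noteq> 0 \<longrightarrow> ((\<exists>i c'. c = 0 # i # c' \<and> i < n) \<or> (\<exists>i j. c = [1, i, j] \<and> i < n \<and> j < d - 1))"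
    "\<forall>j<d - 1. (\<Sum>i<n. x [1, i, j]) = 0" "\<forall>i<n. (\<lambda>c'. x (0 # i # c')) \<in> Wsp d (m # r)"
    using 3(3) unfolding Wsp_cons by auto
  have ex: "\<exists>cc. (\<lambda>c'. x (0 # i # c')) = lc cc B" if "i < n" for i
    unfolding B_def by (rule 3(1)[OF g]) (use X(3) that in auto)
  define c where "c = (\<lambda>p. if p < n * w then (SOME cc. (\<lambda>c'. x (0 # (p div w) # c')) = lc cc B) (p mod w)
      else x ([1] @ [(p - n*w) mod (n-1), (p - n*w) div (n-1)]))"
  have cone: "(\<lambda>k. c (n * w + k)) = (\<lambda>p. x ([1] @ [p mod (n-1), p div (n-1)]))"
    by (auto simp: c_def)
  have split: "lc c (Bas d (n # m # r)) q = lc c (blk n B) q + lc (\<lambda>p. x ([1] @ [p mod (n-1), p div (n-1)])) (onebasis [1] n d) q" for q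
    using lc_append[of c "blk n B" "onebasis [1] n d" q] cone by (simp add: B_def w_def)
  have "x = lc c (Bas d (n # m # r))"
  proof (rule ext)
    fix q
    consider (A) i q' where "q = 0 # i # q'" "i < n" | (B) i j where "q = [1] @ [i, j]" "i < n" "j < d - 1"
      | (C) "\<not> (\<exists>i q'. q = 0 # i # q' \<and> i < n)" "\<not> (\<exists>i j. q = [1, i, j] \<and> i < n \<and> j < d - 1)"
      by auto
    thus "x q = lc c (Bas d (n # m # r)) q"
    proof cases
      case (A i q')
      have w: "\<And>k. k < w \<Longrightarrow> i * w + k < n * w \<and> (i * w + k) div w = i \<and> (i * w + k) mod w = k"
        using A(2) by (simp add: nat_dm_less)
      have "lc c (blk n B) q = lc (\<lambda>k. c (i * w + k)) B q'" unfolding A(1) w_def by (rule lc_blk_a[OF A(2)])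
      also have "\<dots> = lc (SOME cc. (\<lambda>c'. x (0 # i # c')) = lc cc B) B q'"
        by (rule fun_cong[OF lc_cong]) (use w in \<open>simp add: c_def w_def\<close>)
      also have "\<dots> = x q" unfolding A(1) using someI_ex[OF ex[OF A(2)]] by metis
      finally have 1: "lc c (blk n B) q = x q" .
      have 2: "lc (\<lambda>p. x ([1] @ [p mod (n-1), p div (n-1)])) (onebasis [1] n d) q = 0"
        by (rule lc_onebasis_c) (use A n in auto)
      show ?thesis using split[of q] 1 2 by simp
    next
      case (B i j)
      have 1: "lc c (blk n B) q = 0" by (rule lc_blk_b) (use B in auto)
      have 2: "lc (\<lambda>p. x ([1] @ [p mod (n-1), p div (n-1)])) (onebasis [1] n d) q = x q"
        unfolding B(1) by (rule onepart_span[OF n _ B(2,3)]) (use X(2) B(3) in simp)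
      show ?thesis using split[of q] 1 2 by simp
    next
      case C
      have 0: "x q = 0" using X(1) C by blast
      have 1: "lc c (blk n B) q = 0" by (rule lc_blk_b) (use C in auto)
      have 2: "lc (\<lambda>p. x ([1] @ [p mod (n-1), p div (n-1)])) (onebasis [1] n d) q = 0"
        by (rule lc_onebasis_c) (use C n in auto)
      show ?thesis using split[of q] 0 1 2 by simp
    qed
  qed
  thus ?case by blast
qed

lemma onepart_indep:
  assumes "\<And>q. lc c (onebasis pre n d) q = 0" and p: "p < (d-1)*(n-1)"
  shows "c p = 0"
proof -
  have n: "n - 1 > 0" using p by (cases "n - 1") auto
  have j: "p div (n-1) < d - 1" using p by (rule nat_div_less)
  have i: "p mod (n-1) < n - 1" using n by simp
  have "c (p div (n-1) * (n-1) + p mod (n-1)) = 0"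
    using lc_onebasis_a[OF i j, of c pre] assms(1) by simp
  thus ?thesis by (metis div_mult_mod_eq)
qed

lemma Bas_indep: "good rs \<Longrightarrow> lc c (Bas d rs) = (\<lambda>_. 0) \<Longrightarrow> \<forall>i<length (Bas d rs). c i = 0"
proof (induction d rs arbitrary: c rule: Bas.induct)
  case (1 d) thus ?case by (simp add: good_def)
next
  case (2 d n)
  show ?case using onepart_indep[of c "[]" n d] 2(2) by (simp add: fun_eq_iff)
next
  case (3 d n m r)
  define B where "B = Bas d (m # r)"
  define w where "w = length B"
  have n: "2 \<le> n" and g: "good (m # r)" using 3 by auto
  have Z: "lc c (blk n B) q + lc (\<lambda>k. c (n * w + k)) (onebasis [1] n d) q = 0" for q
    using 3(3) lc_append[of c "blk n B" "onebasis [1] n d" q] by (simp add: B_def w_def fun_eq_iff)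
  have blk0: "c (i * w + k) = 0" if i: "i < n" and k: "k < w" for i k
  proof -
    have "lc (\<lambda>k. c (i * w + k)) B q' = 0" for q'
    proof -
      have "lc (\<lambda>k. c (n * w + k)) (onebasis [1] n d) (0 # i # q') = 0"
        by (rule lc_onebasis_c) (use n in auto)
      thus ?thesis using Z[of "0 # i # q'"] lc_blk_a[OF i, of c B q'] by (simp add: w_def)
    qed
    hence "lc (\<lambda>k. c (i * w + k)) (Bas d (m # r)) = (\<lambda>_. 0)" by (auto simp: B_def)
    hence "\<forall>k<length (Bas d (m # r)). c (i * w + k) = 0" by (rule 3(1)[OF g])
    thus ?thesis using k by (simp add: w_def B_def)
  qed
  have one0: "c (n * w + p) = 0" if p: "p < (d-1)*(n-1)" for p
  proof -
    have "lc (\<lambda>k. c (n * w + k)) (onebasis [1] n d) q = 0" for q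
    proof (cases "\<exists>a q'. q = 0 # a # q' \<and> a < n")
      case True
      then obtain a q' where q: "q = 0 # a # q'" "a < n" by auto
      have "lc (\<lambda>k. c (n * w + k)) (onebasis [1] n d) q = 0"
        unfolding q(1) by (rule lc_onebasis_c) (use n in auto)
      thus ?thesis .
    next
      case False
      thus ?thesis using Z[of q] lc_blk_b[OF False, of c B] by simp
    qed
    thus ?thesis by (rule onepart_indep[OF _ p])
  qed
  show ?case
  proof (intro allI impI)
    fix p assume p: "p < length (Bas d (n # m # r))"
    show "c p = 0"
    proof (cases "p < n * w")
      case True
      have w: "w > 0" using True by (cases w) auto
      have "p div w < n" using True by (rule nat_div_less)
      moreover have "p mod w < w" using w by simp
      ultimately have "c (p div w * w + p mod w) = 0" by (rule blk0)
      thus ?thesis by simp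
    next
      case False
      have "p - n * w < (d-1)*(n-1)" using p False by (simp add: B_def w_def)
      hence "c (n * w + (p - n * w)) = 0" by (rule one0)
      thus ?thesis using False by simp
    qed
  qed
qed

lemma Bas_basis: "good rs \<Longrightarrow> is_basis (Wsp d rs) (Bas d rs)"
proof -
  assume g: "good rs"
  show ?thesis by (rule basisI) (use Bas_sub[OF g] Bas_span[OF g] Bas_indep[OF g] in auto)
qed



lemma inSigma_single: "inSigma [n] S \<Longrightarrow> \<exists>\<sigma>. S = Base \<sigma> \<and> \<sigma> permutes {..<n}"
  by (cases S) auto

lemma inSigma_cons: "inSigma (n # m # r) S \<Longrightarrow>
   \<exists>G \<sigma>. S = Node G \<sigma> \<and> \<sigma> permutes {..<n} \<and> (\<forall>i<n. inSigma (m # r) (G i))"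
  by (cases S) auto

lemma length_Bas: "good rs \<Longrightarrow> length (Bas d rs) + (d-1) = (d-1) * prod_list rs"
proof (induction d rs rule: Bas.induct)
  case (1 d) thus ?case by (simp add: good_def)
next
  case (2 d n)
  hence "n = Suc (n-1)" by simp
  hence "(d-1)*(n-1) + (d-1) = (d-1) * n" by (metis mult_Suc_right add.commute)
  thus ?case by simp
next
  case (3 d n m r)
  have IH: "length (Bas d (m # r)) + (d-1) = (d-1) * prod_list (m # r)" using 3 by simp
  have n: "n = Suc (n-1)" using 3 by simp
  have "length (Bas d (n # m # r)) + (d-1) = n * length (Bas d (m # r)) + ((d-1)*(n-1) + (d-1))" by simp
  also have "(d-1)*(n-1) + (d-1) = (d-1) * n" using n by (metis mult_Suc_right add.commute)
  also have "n * length (Bas d (m # r)) + (d-1) * n = n * (length (Bas d (m # r)) + (d-1))"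
    by (simp add: algebra_simps)
  also have "\<dots> = (d-1) * prod_list (n # m # r)" using IH by simp
  finally show ?case .
qed

lemma length_Bas_cons: "length (Bas d (n # m # r)) = n * length (Bas d (m # r)) + (d-1)*(n-1)"
  by simp

lemma det_C1:
  assumes s: "\<sigma> permutes {..<n}" and n: "1 \<le> n"
  shows "det (C1 n d \<sigma>) = signof \<sigma> ^ (d-1)"
proof -
  have "det (C1 n d \<sigma>) = (\<Prod>i<d-1. det (Cs n \<sigma>))"
    unfolding C1_def by (rule det_bd) (rule Cs_carrier)
  also have "\<dots> = signof \<sigma> ^ (d-1)" using det_Cs[OF s n] by simp
  finally show ?thesis .
qed

lemma C1_dims: "dim_row (C1 n d \<sigma>) = (d-1)*(n-1)" "dim_col (C1 n d \<sigma>) = (d-1)*(n-1)"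
  using C1_carrier[of n d \<sigma>] by auto

lemma C1_carrier'[simp]: "C1 n d \<sigma> \<in> carrier_mat ((d - Suc 0)*(n - Suc 0)) ((d - Suc 0)*(n - Suc 0))"
  using C1_carrier[of n d \<sigma>] by simp

lemma C1_dims'[simp]: "dim_row (C1 n d \<sigma>) = (d - Suc 0)*(n - Suc 0)" "dim_col (C1 n d \<sigma>) = (d - Suc 0)*(n - Suc 0)"
  using C1_dims[of n d \<sigma>] by auto

lemma Mblk_dims[simp]: "dim_row (Mblk n w Ms \<sigma>) = n*w" "dim_col (Mblk n w Ms \<sigma>) = n*w"
  by (simp_all add: Mblk_def)

lemma Mblk_carrier[simp]: "Mblk n w Ms \<sigma> \<in> carrier_mat (n*w) (n*w)" by (simp add: Mblk_def)

lemma Mof_carrier: "good rs \<Longrightarrow> inSigma rs S \<Longrightarrow> Mof d rs S \<in> carrier_mat (length (Bas d rs)) (length (Bas d rs))"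
proof (induction S arbitrary: rs)
  case (Base \<sigma>)
  then obtain n where rs: "rs = [n]" by (cases rs; cases "tl rs") (auto simp: good_def)
  thus ?case using C1_carrier[of n d \<sigma>] by simp
next
  case (Node G \<sigma>)
  then obtain n m r where rs: "rs = n # m # r" by (cases rs; cases "tl rs") (auto simp: good_def)
  show ?case unfolding rs using C1_carrier[of n d \<sigma>] by (simp add: four_block_carrier_mat)
qed

lemma u_trunc: "a < n \<Longrightarrow> (if a < n - 1 then u pre n a j q else 0) = ev (pre @ [a, j]) q - ev (pre @ [n-1, j]) q"
proof (cases "a < n - 1")
  case False
  assume "a < n"
  hence "a = n - 1" using False by simp
  thus ?thesis by simp
qed (simp add: u_def)

lemma onepart_act:
  assumes n: "2 \<le> n" and s: "\<sigma> permutes {..<n}" and j': "j' < (d-1)*(n-1)"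
  shows "lc (\<lambda>r. C1 n d \<sigma> $$ (r, j')) (onebasis pre n d)
     = (\<lambda>q. ev (pre @ [\<sigma> (j' mod (n-1)), j' div (n-1)]) q - ev (pre @ [\<sigma> (n-1), j' div (n-1)]) q)"
proof (rule ext)
  fix q
  define i0 where "i0 = j' mod (n-1)"
  define j0 where "j0 = j' div (n-1)"
  have n1: "n - 1 > 0" using n by simp
  have i0: "i0 < n - 1" using n1 by (simp add: i0_def)
  have j0: "j0 < d - 1" using j' by (simp add: j0_def nat_div_less)
  have si: "\<And>i. i < n \<Longrightarrow> \<sigma> i < n" using permutes_in_image[OF s] by auto
  have C: "C1 n d \<sigma> $$ (j*(n-1)+i, j') = (if j = j0 then (if i = \<sigma> i0 then 1 else 0) - (if i = \<sigma> (n-1) then 1 else 0) else 0)"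
    if "j < d-1" "i < n-1" for i j
  proof -
    have "j*(n-1)+i < (d-1)*(n-1)" using that by (simp add: nat_dm_less)
    thus ?thesis using that j' i0 n1 by (simp add: C1_def bd_def Cs_def i0_def j0_def)
  qed
  have "lc (\<lambda>r. C1 n d \<sigma> $$ (r, j')) (onebasis pre n d) q
      = (\<Sum>j<d-1. \<Sum>i<n-1. C1 n d \<sigma> $$ (j*(n-1)+i, j') * u pre n i j q)"
    by (rule lc_onebasis_sum)
  also have "\<dots> = (\<Sum>j<d-1. if j = j0 then (\<Sum>i<n-1. ((if i = \<sigma> i0 then 1 else 0) - (if i = \<sigma> (n-1) then 1 else 0)) * u pre n i j0 q) else 0)"
  proof (intro sum.cong refl)
    fix j assume "j \<in> {..<d-1}"
    hence j: "j < d - 1" by simp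
    show "(\<Sum>i<n-1. C1 n d \<sigma> $$ (j*(n-1)+i, j') * u pre n i j q) = (if j = j0 then (\<Sum>i<n-1. ((if i = \<sigma> i0 then 1 else 0) - (if i = \<sigma> (n-1) then 1 else 0)) * u pre n i j0 q) else 0)"
    proof (cases "j = j0")
      case True
      have "(\<Sum>i<n-1. C1 n d \<sigma> $$ (j*(n-1)+i, j') * u pre n i j q) = (\<Sum>i<n-1. ((if i = \<sigma> i0 then 1 else 0) - (if i = \<sigma> (n-1) then 1 else 0)) * u pre n i j0 q)"
      proof (rule sum.cong[OF refl])
        fix i assume "i \<in> {..<n-1}" hence i: "i < n-1" by simp
        show "C1 n d \<sigma> $$ (j*(n-1)+i, j') * u pre n i j q = ((if i = \<sigma> i0 then 1 else 0) - (if i = \<sigma> (n-1) then 1 else 0)) * u pre n i j0 q"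
          unfolding C[OF j i] using True by simp
      qed
      thus ?thesis using True by simp
    next
      case False
      have "(\<Sum>i<n-1. C1 n d \<sigma> $$ (j*(n-1)+i, j') * u pre n i j q) = 0"
      proof (rule sum.neutral, rule ballI)
        fix i assume "i \<in> {..<n-1}" hence i: "i < n-1" by simp
        show "C1 n d \<sigma> $$ (j*(n-1)+i, j') * u pre n i j q = 0"
          unfolding C[OF j i] using False by simp
      qed
      thus ?thesis using False by simp
    qed
  qed
  also have "\<dots> = (\<Sum>i<n-1. ((if i = \<sigma> i0 then 1 else 0) - (if i = \<sigma> (n-1) then 1 else 0)) * u pre n i j0 q)"
    using j0 by simp
  also have "\<dots> = (\<Sum>i<n-1. (if i = \<sigma> i0 then u pre n i j0 q else 0) - (if i = \<sigma> (n-1) then u pre n i j0 q else 0))"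
    by (intro sum.cong refl) auto
  also have "\<dots> = (if \<sigma> i0 < n-1 then u pre n (\<sigma> i0) j0 q else 0) - (if \<sigma> (n-1) < n-1 then u pre n (\<sigma> (n-1)) j0 q else 0)"
    by (simp add: sum_subtractf)
  also have "\<dots> = ev (pre @ [\<sigma> i0, j0]) q - ev (pre @ [\<sigma> (n-1), j0]) q"
    using u_trunc[OF si[of i0], of pre j0 q] u_trunc[OF si[of "n-1"], of pre j0 q] i0 n1 by simp
  finally show "lc (\<lambda>r. C1 n d \<sigma> $$ (r, j')) (onebasis pre n d) q
     = ev (pre @ [\<sigma> (j' mod (n-1)), j' div (n-1)]) q - ev (pre @ [\<sigma> (n-1), j' div (n-1)]) q"
    by (simp add: i0_def j0_def)
qed

lemma Mof_repr: "good rs \<Longrightarrow> inSigma rs S \<Longrightarrow> mat_repr (Bas d rs) (act S) (Mof d rs S)"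
proof (induction S arbitrary: rs)
  case (Base \<sigma>)
  then obtain n where rs: "rs = [n]" by (cases rs; cases "tl rs") (auto simp: good_def)
  have n: "2 \<le> n" and s: "\<sigma> permutes {..<n}" using Base rs by auto
  show ?case unfolding mat_repr_lc
  proof (intro conjI allI impI)
    show "Mof d rs (Base \<sigma>) \<in> carrier_mat (length (Bas d rs)) (length (Bas d rs))"
      using Mof_carrier[OF Base(1,2)] .
  next
    fix j assume j: "j < length (Bas d rs)"
    hence j': "j < (d-1)*(n-1)" using rs by simp
    have "act (Base \<sigma>) (Bas d rs ! j) = act (Base \<sigma>) (u [] n (j mod (n-1)) (j div (n-1)))"
      using j' rs by (simp add: onebasis_nth)
    also have "\<dots> = (\<lambda>q. ev [\<sigma> (j mod (n-1)), j div (n-1)] q - ev [\<sigma> (n-1), j div (n-1)] q)"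
      by (rule act_u0[OF s])
    also have "\<dots> = lc (\<lambda>i. C1 n d \<sigma> $$ (i, j)) (onebasis [] n d)"
      using onepart_act[OF n s j', of "[]"] by simp
    finally show "act (Base \<sigma>) (Bas d rs ! j) = lc (\<lambda>i. Mof d rs (Base \<sigma>) $$ (i, j)) (Bas d rs)"
      using rs by simp
  qed
next
  case (Node G \<sigma>)
  then obtain n m r where rs: "rs = n # m # r" by (cases rs; cases "tl rs") (auto simp: good_def)
  have n: "2 \<le> n" and g: "good (m # r)" and s: "\<sigma> permutes {..<n}"
    and Gi: "\<And>i. i < n \<Longrightarrow> inSigma (m # r) (G i)" using Node rs by auto
  have si: "\<And>i. i < n \<Longrightarrow> \<sigma> i < n" using permutes_in_image[OF s] by auto
  define B where "B = Bas d (m # r)"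
  define w where "w = length B"
  define Ms where "Ms = (\<lambda>i. Mof d (m # r) (G i))"
  define M where "M = Mof d rs (Node G \<sigma>)"
  have M: "M = four_block_mat (Mblk n w Ms \<sigma>) (0\<^sub>m (n*w) ((d-1)*(n-1))) (0\<^sub>m ((d-1)*(n-1)) (n*w)) (C1 n d \<sigma>)"
    by (simp add: M_def rs B_def w_def Ms_def)
  have Msc: "\<And>i. i < n \<Longrightarrow> Ms i \<in> carrier_mat w w"
    unfolding Ms_def w_def B_def by (rule Mof_carrier[OF g Gi])
  have IH: "\<And>i. i < n \<Longrightarrow> mat_repr B (act (G i)) (Ms i)"
    unfolding B_def Ms_def by (rule Node.IH[OF rangeI g Gi])
  have Bs: "Bas d rs = blk n B @ onebasis [1] n d" by (simp add: rs B_def)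
  have lenB: "length (Bas d rs) = n*w + (d-1)*(n-1)" by (simp add: Bs w_def)
  have Ment: "M $$ (r', j) = (if r' < n*w then (if j < n*w then Mblk n w Ms \<sigma> $$ (r', j) else 0)
      else (if j < n*w then 0 else C1 n d \<sigma> $$ (r' - n*w, j - n*w)))"
    if "r' < n*w + (d-1)*(n-1)" "j < n*w + (d-1)*(n-1)" for r' j
    unfolding M using that by (simp add: index_mat_four_block C1_dims)
  have split: "lc c (Bas d rs) q = lc c (blk n B) q + lc (\<lambda>k. c (n * w + k)) (onebasis [1] n d) q" for c q
    unfolding Bs using lc_append[of c "blk n B" "onebasis [1] n d" q] by (simp add: w_def)
  show ?case unfolding mat_repr_lc
  proof (intro conjI allI impI)
    show "Mof d rs (Node G \<sigma>) \<in> carrier_mat (length (Bas d rs)) (length (Bas d rs))"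
      using Mof_carrier[OF Node(2,3)] .
  next
    fix j assume j: "j < length (Bas d rs)"
    hence jl: "j < n*w + (d-1)*(n-1)" using lenB by simp
    show "act (Node G \<sigma>) (Bas d rs ! j) = lc (\<lambda>i. Mof d rs (Node G \<sigma>) $$ (i, j)) (Bas d rs)"
      unfolding M_def[symmetric]
    proof (cases "j < n*w")
      case True
      define i0 where "i0 = j div w"
      define k0 where "k0 = j mod w"
      have w: "w > 0" using True by (cases w) auto
      have i0: "i0 < n" using True by (simp add: i0_def nat_div_less)
      have k0: "k0 < w" using w by (simp add: k0_def)
      have bj: "Bas d rs ! j = emb i0 (B ! k0)"
        using True by (simp add: Bs nth_append blk_def i0_def k0_def w_def)
      have rep: "act (G (\<sigma> i0)) (B ! k0) = lc (\<lambda>i. Ms (\<sigma> i0) $$ (i, k0)) B"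
        using IH[OF si[OF i0]] k0 unfolding mat_repr_lc w_def by auto
      have LHS: "act (Node G \<sigma>) (Bas d rs ! j) = emb (\<sigma> i0) (lc (\<lambda>i. Ms (\<sigma> i0) $$ (i, k0)) B)"
        unfolding bj act_emb[OF s] rep ..
      show "act (Node G \<sigma>) (Bas d rs ! j) = lc (\<lambda>i. M $$ (i, j)) (Bas d rs)"
      proof (rule ext)
        fix q
        have one0: "lc (\<lambda>k. M $$ (n * w + k, j)) (onebasis [1] n d) q = 0"
          by (rule lc_zero_coeff) (use Ment True in simp)
        have blkv: "lc (\<lambda>i. M $$ (i, j)) (blk n B) q = emb (\<sigma> i0) (lc (\<lambda>i. Ms (\<sigma> i0) $$ (i, k0)) B) q"
        proof (cases "\<exists>a q'. q = 0 # a # q' \<and> a < n")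
          case True2: True
          then obtain a q' where q: "q = 0 # a # q'" "a < n" by auto
          have ent: "M $$ (a * w + k, j) = (if a = \<sigma> i0 then Ms (\<sigma> i0) $$ (k, k0) else 0)" if k: "k < w" for k
          proof -
            have akl: "a * w + k < n * w" using q(2) k by (rule nat_dm_less)
            thus ?thesis using Ment[of "a*w+k" j] jl True k
              by (simp add: Mblk_def i0_def k0_def)
          qed
          have "lc (\<lambda>i. M $$ (i, j)) (blk n B) q = lc (\<lambda>k. M $$ (a * w + k, j)) B q'"
            unfolding q(1) w_def by (rule lc_blk_a[OF q(2)])
          also have "\<dots> = (if a = \<sigma> i0 then lc (\<lambda>i. Ms (\<sigma> i0) $$ (i, k0)) B q' else 0)"
          proof (cases "a = \<sigma> i0")
            case True
            have "lc (\<lambda>k. M $$ (a * w + k, j)) B = lc (\<lambda>i. Ms (\<sigma> i0) $$ (i, k0)) B"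
            proof (rule lc_cong)
              fix k assume "k < length B" hence k: "k < w" by (simp add: w_def)
              show "M $$ (a * w + k, j) = Ms (\<sigma> i0) $$ (k, k0)" using ent[OF k] True by simp
            qed
            thus ?thesis using True by simp
          next
            case False
            have "lc (\<lambda>k. M $$ (a * w + k, j)) B q' = 0"
            proof (rule lc_zero_coeff)
              fix k assume "k < length B" hence k: "k < w" by (simp add: w_def)
              show "M $$ (a * w + k, j) = 0" using ent[OF k] False by simp
            qed
            thus ?thesis using False by simp
          qed
          also have "\<dots> = emb (\<sigma> i0) (lc (\<lambda>i. Ms (\<sigma> i0) $$ (i, k0)) B) q"
            unfolding q(1) by simp
          finally show ?thesis .
        next
          case False
          have "lc (\<lambda>i. M $$ (i, j)) (blk n B) q = 0" by (rule lc_blk_b[OF False])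
          moreover have "emb (\<sigma> i0) X q = 0" for X
          proof (cases "\<exists>a q'. q = 0 # a # q'")
            case True
            then obtain a q' where q: "q = 0 # a # q'" by auto
            hence "\<not> a < n" using False by auto
            hence "a \<noteq> \<sigma> i0" using si[OF i0] by auto
            thus ?thesis unfolding q by simp
          next
            case False
            thus ?thesis by (rule emb_other)
          qed
          ultimately show ?thesis by simp
        qed
        show "act (Node G \<sigma>) (Bas d rs ! j) q = lc (\<lambda>i. M $$ (i, j)) (Bas d rs) q"
          unfolding split LHS one0 blkv by simp
      qed
    next
      case False
      define j' where "j' = j - n*w"
      have j': "j' < (d-1)*(n-1)" using jl False by (simp add: j'_def)
      have bj: "Bas d rs ! j = u [1] n (j' mod (n-1)) (j' div (n-1))"
        using False j' by (simp add: Bs nth_append w_def j'_def onebasis_nth)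
      show "act (Node G \<sigma>) (Bas d rs ! j) = lc (\<lambda>i. M $$ (i, j)) (Bas d rs)"
      proof (rule ext)
        fix q
        have blk0: "lc (\<lambda>i. M $$ (i, j)) (blk n B) q = 0"
          by (rule lc_zero_coeff) (use Ment jl False in \<open>simp add: w_def\<close>)
        have "lc (\<lambda>k. M $$ (n * w + k, j)) (onebasis [1] n d) = lc (\<lambda>k. C1 n d \<sigma> $$ (k, j')) (onebasis [1] n d)"
          by (rule lc_cong) (use Ment jl False in \<open>simp add: j'_def\<close>)
        also have "\<dots> = (\<lambda>q. ev ([1] @ [\<sigma> (j' mod (n-1)), j' div (n-1)]) q - ev ([1] @ [\<sigma> (n-1), j' div (n-1)]) q)"
          by (rule onepart_act[OF n s j'])
        finally have one: "lc (\<lambda>k. M $$ (n * w + k, j)) (onebasis [1] n d) q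
           = ev [1, \<sigma> (j' mod (n-1)), j' div (n-1)] q - ev [1, \<sigma> (n-1), j' div (n-1)] q" by simp
        show "act (Node G \<sigma>) (Bas d rs ! j) q = lc (\<lambda>i. M $$ (i, j)) (Bas d rs) q"
          unfolding split bj act_u1[OF s] blk0 one by simp
      qed
    qed
  qed
qed

lemma det_Mof: "good rs \<Longrightarrow> inSigma rs S \<Longrightarrow> det (Mof d rs S) = of_int (orient d rs S)"
proof (induction S arbitrary: rs)
  case (Base \<sigma>)
  then obtain n where rs: "rs = [n]" by (cases rs; cases "tl rs") (auto simp: good_def)
  have n: "2 \<le> n" and s: "\<sigma> permutes {..<n}" using Base rs by auto
  have "det (Mof d rs (Base \<sigma>)) = signof \<sigma> ^ (d-1)"
    unfolding rs using det_C1[OF s] n by simp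
  thus ?case using rs by simp
next
  case (Node G \<sigma>)
  then obtain n m r where rs: "rs = n # m # r" by (cases rs; cases "tl rs") (auto simp: good_def)
  have n: "2 \<le> n" and g: "good (m # r)" and s: "\<sigma> permutes {..<n}"
    and Gi: "\<And>i. i < n \<Longrightarrow> inSigma (m # r) (G i)" using Node rs by auto
  define w where "w = length (Bas d (m # r))"
  define Ms where "Ms = (\<lambda>i. Mof d (m # r) (G i))"
  have Msc: "\<And>i. i < n \<Longrightarrow> Ms i \<in> carrier_mat w w"
    unfolding Ms_def w_def by (rule Mof_carrier[OF g Gi])
  have IH: "\<And>i. i < n \<Longrightarrow> det (Ms i) = of_int (orient d (m # r) (G i))"
    unfolding Ms_def by (rule Node.IH[OF rangeI g Gi])
  have "det (Mof d rs (Node G \<sigma>)) = det (Mblk n w Ms \<sigma>) * det (C1 n d \<sigma>)"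
    unfolding rs by (simp add: w_def Ms_def del: Bas.simps) (rule det_four_block_mat_lower_left_zero, auto)
  also have "det (Mblk n w Ms \<sigma>) = signof \<sigma> ^ w * (\<Prod>i<n. det (Ms i))"
    unfolding Mblk_def by (rule det_blockperm[OF s Msc])
  also have "det (C1 n d \<sigma>) = signof \<sigma> ^ (d-1)"
    using det_C1[OF s] n by simp
  also have "(\<Prod>i<n. det (Ms i)) = (\<Prod>i<n. of_int (orient d (m # r) (G i)))"
    by (rule prod.cong) (simp_all add: IH)
  finally have "det (Mof d rs (Node G \<sigma>)) = signof \<sigma> ^ (w + (d-1)) * (\<Prod>i<n. of_int (orient d (m # r) (G i)))"
    by (simp add: power_add)
  also have "w + (d-1) = (d-1) * prod_list (m # r)" unfolding w_def by (rule length_Bas[OF g])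
  finally show ?case unfolding rs by simp
qed



lemma sign_abs: "\<bar>sign p\<bar> = (1::int)" by (simp add: sign_def)

lemma orient_abs: "inSigma rs S \<Longrightarrow> \<bar>orient d rs S\<bar> = 1"
proof (induction S arbitrary: rs)
  case (Base \<sigma>)
  show ?case by (simp add: power_abs sign_abs)
next
  case (Node G \<sigma>)
  then obtain n m r where rs: "rs = n # m # r" by (cases rs; cases "tl rs") auto
  have Gi: "\<And>i. i < n \<Longrightarrow> inSigma (m # r) (G i)" using Node rs by auto
  have "\<bar>\<Prod>i<n. orient d (m # r) (G i)\<bar> = (\<Prod>i<n. \<bar>orient d (m # r) (G i)\<bar>)" by (rule abs_prod)
  also have "\<dots> = 1" using Node.IH[OF rangeI Gi] by simp
  finally show ?case unfolding rs by (simp add: abs_mult power_abs sign_abs)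
qed

lemma orient_pm: "inSigma rs S \<Longrightarrow> orient d rs S \<in> {-1, 1}"
  using orient_abs[of rs S d] by (auto simp: abs_if split: if_splits)

lemma perm_of_permutes: "\<sigma> permutes {..<(n::nat)} \<Longrightarrow> permutation \<sigma>"
  using permutation_permutes by blast

lemma orient_mult: "inSigma rs S \<Longrightarrow> inSigma rs T \<Longrightarrow>
   orient d rs (mult S T) = orient d rs S * orient d rs T"
proof (induction S arbitrary: rs T)
  case (Base \<sigma>)
  then obtain n where rs: "rs = [n]" by (cases rs; cases "tl rs") auto
  obtain \<tau> where T: "T = Base \<tau>" "\<tau> permutes {..<n}" using Base(2) rs inSigma_single by blast
  have s: "\<sigma> permutes {..<n}" using Base(1) rs by simp
  have "sign (\<sigma> \<circ> \<tau>) = sign \<sigma> * sign \<tau>"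
    by (rule sign_compose) (use perm_of_permutes s T(2) in auto)
  thus ?case unfolding T(1) by (simp add: power_mult_distrib)
next
  case (Node G \<sigma>)
  then obtain n m r where rs: "rs = n # m # r" by (cases rs; cases "tl rs") auto
  have s: "\<sigma> permutes {..<n}" and Gi: "\<And>i. i < n \<Longrightarrow> inSigma (m # r) (G i)" using Node(2) rs by auto
  obtain H \<tau> where T: "T = Node H \<tau>" "\<tau> permutes {..<n}" "\<And>i. i < n \<Longrightarrow> inSigma (m # r) (H i)"
    using Node(3) rs inSigma_cons by blast
  have si: "Hilbert_Choice.inv \<sigma> permutes {..<n}" by (rule permutes_inv[OF s])
  have sii: "\<And>i. i < n \<Longrightarrow> Hilbert_Choice.inv \<sigma> i < n" using permutes_in_image[OF si] by auto
  have sg: "sign (\<sigma> \<circ> \<tau>) = sign \<sigma> * sign \<tau>"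
    by (rule sign_compose) (use perm_of_permutes s T(2) in auto)
  have "(\<Prod>i<n. orient d (m # r) (mult (G i) (H (Hilbert_Choice.inv \<sigma> i))))
      = (\<Prod>i<n. orient d (m # r) (G i) * orient d (m # r) (H (Hilbert_Choice.inv \<sigma> i)))"
    by (rule prod.cong[OF refl]) (use Node.IH[OF rangeI Gi T(3)[OF sii]] in simp)
  also have "\<dots> = (\<Prod>i<n. orient d (m # r) (G i)) * (\<Prod>i<n. orient d (m # r) (H (Hilbert_Choice.inv \<sigma> i)))"
    by (rule prod.distrib)
  also have "(\<Prod>i<n. orient d (m # r) (H (Hilbert_Choice.inv \<sigma> i))) = (\<Prod>i<n. orient d (m # r) (H i))"
    using prod.permute[OF si, of "\<lambda>i. orient d (m # r) (H i)"] by (simp add: comp_def)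
  finally have P: "(\<Prod>i<n. orient d (m # r) (mult (G i) (H (Hilbert_Choice.inv \<sigma> i))))
      = (\<Prod>i<n. orient d (m # r) (G i)) * (\<Prod>i<n. orient d (m # r) (H i))" .
  show ?case unfolding T(1) rs by (simp add: P sg power_mult_distrib algebra_simps)
qed

lemma good_rev: "ns \<noteq> [] \<Longrightarrow> \<forall>n\<in>set ns. n \<ge> 2 \<Longrightarrow> good (rev ns)"
  by (simp add: good_def)

theorem lemma3p6:
  fixes d :: nat and ns :: "nat list" and S :: wr
  assumes "ns \<noteq> []" and "d \<ge> 1" and "\<forall>n\<in>set ns. n \<ge> 2"
    and "inSigma (rev ns) S"
  shows "(\<exists>bs A. is_basis (Wsp d (rev ns)) bs \<and> mat_repr bs (act S) A)
    \<and> (\<forall>bs A. is_basis (Wsp d (rev ns)) bs \<and> mat_repr bs (act S) A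
          \<longrightarrow> sgn (det A) = of_int (orient d (rev ns) S))
    \<and> orient d (rev ns) S \<in> {-1, 1}
    \<and> (\<forall>T. inSigma (rev ns) T \<longrightarrow>
          orient d (rev ns) (mult S T) = orient d (rev ns) S * orient d (rev ns) T)"
proof (intro conjI allI impI)
  define rs where "rs = rev ns"
  have g: "good rs" unfolding rs_def by (rule good_rev) (use assms in auto)
  have rsne: "rs \<noteq> []" using g by (simp add: good_def)
  have S: "inSigma rs S" using assms(4) by (simp add: rs_def)
  show "\<exists>bs A. is_basis (Wsp d (rev ns)) bs \<and> mat_repr bs (act S) A"
    using Bas_basis[OF g, of d] Mof_repr[OF g S, of d] unfolding rs_def by blast
  show "orient d (rev ns) S \<in> {-1, 1}" using orient_pm[OF S] by (simp add: rs_def)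
  fix T assume "inSigma (rev ns) T"
  thus "orient d (rev ns) (mult S T) = orient d (rev ns) S * orient d (rev ns) T"
    using orient_mult[OF S] by (simp add: rs_def)
next
  define rs where "rs = rev ns"
  have g: "good rs" unfolding rs_def by (rule good_rev) (use assms in auto)
  have rsne: "rs \<noteq> []" using g by (simp add: good_def)
  have S: "inSigma rs S" using assms(4) by (simp add: rs_def)
  fix bs A assume H: "is_basis (Wsp d (rev ns)) bs \<and> mat_repr bs (act S) A"
  have B2: "is_basis (Wsp d rs) bs" and R2: "mat_repr bs (act S) A" using H by (auto simp: rs_def)
  have sub2: "set bs \<subseteq> Wsp d rs" using B2 by (simp add: is_basis_def)
  have "det (Mof d rs S) = det A"
  proof (rule det_basis_indep[OF Bas_basis[OF g] B2])
    show "\<And>c. lc c (Bas d rs) \<in> Wsp d rs" by (rule Wsp_lc[OF rsne Bas_sub[OF g]])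
    show "\<And>c. lc c bs \<in> Wsp d rs" by (rule Wsp_lc[OF rsne sub2])
    show "\<And>c. act S (lc c (Bas d rs)) = lc c (map (act S) (Bas d rs))" by (rule act_lc)
    show "mat_repr (Bas d rs) (act S) (Mof d rs S)" by (rule Mof_repr[OF g S])
    show "mat_repr bs (act S) A" by (rule R2)
  qed
  hence dA: "det A = of_int (orient d rs S)" using det_Mof[OF g S] by simp
  have "orient d rs S \<in> {-1, 1}" by (rule orient_pm[OF S])
  thus "sgn (det A) = of_int (orient d (rev ns) S)" using dA by (auto simp: rs_def)
qed


end
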